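(* Let $(A,\succ,\prec)$ be a finite-dimensional dendriform algebra with associated associative product $*$, and let $r\in A\otimes A$ be symmetric ($\sigma(r)=r$) and satisfy the $D$-equation $r_{12}*r_{13}=r_{13}\prec r_{23}+r_{23}\succ r_{12}$. Define $\Delta_\succ(x)=-(\mathrm{id}\otimes L(x)-R_\prec(x)\otimes\mathrm{id})r$ and $\Delta_\prec(x)=(\mathrm{id}\otimes L_\succ(x)-R(x)\otimes\mathrm{id})r$. Then the products $\langle a^*\succ_{A^*}b^*,x\rangle=\langle a^*\otimes b^*,\Delta_\succ(x)\rangle$, $\langle a^*\prec_{A^*}b^*,x\rangle=\langle a^*\otimes b^*,\Delta_\prec(x)\rangle$ define a dendriform algebra on $A^*$, and $(A,A^* )$ is a dendriform D-bialgebra.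
   Context: A dendriform algebra is a vector space with bilinear products $\prec,\succ$ such that, writing $x*y=x\prec y+x\succ y$: $(x\prec y)\prec z=x\prec(y*z)$, $(x\succ y)\prec z=x\succ(y\prec z)$, $x\succ(y\succ z)=(x*y)\succ z$. Notation: $L_\succ(x)y=x\succ y$, $R_\succ(x)y=y\succ x$, $L_\prec(x)y=x\prec y$, $R_\prec(x)y=y\prec x$, $L=L_\succ+L_\prec$, $R=R_\succ+R_\prec$; subscripts $A$, $A^*$ indicate the algebra. $\sigma(u\otimes v)=v\otimes u$. For $r=\sum_i x_i\otimes y_i$: $r_{12}*r_{13}=\sum_{i,j}x_i*x_j\otimes y_i\otimes y_j$, $r_{13}\prec r_{23}=\sum_{i,j}x_i\otimes x_j\otimes y_i\prec y_j$, $r_{23}\succ r_{12}=\sum_{i,j}x_j\otimes x_i\succ y_j\otimes y_i$. Dendriform D-bialgebra: given dendriform algebras $(A,\succ_A,\prec_A)$, $(A^*,\succ_{A^*},\prec_{A^*})$ with associated products $*_A,*_{A^*}$, let $\langle\beta_\succ(a^* ),x\otimes y\rangle=\langle a^*,x\succ_Ay\rangle$, $\langle\beta_\prec(a^* ),x\otimes y\rangle=\langle a^*,x\prec_Ay\rangle$, $\langle\Delta_\succ(x),a^*\otimes b^*\rangle=\langle x,a^*\succ_{A^*}b^*\rangle$, $\langle\Delta_\prec(x),a^*\otimes b^*\rangle=\langle x,a^*\prec_{A^*}b^*\rangle$. The pair $(A,A^* )$ is a dendriform D-bialgebra if for all $x,y\in A$, $a^*,b^*\in A^*$: (1) $\Delta_\prec(x*_Ay)=(\mathrm{id}\otimes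 L_{\succ_A}(x))\Delta_\prec(y)+(R_A(y)\otimes\mathrm{id})\Delta_\prec(x)$; (2) $\Delta_\succ(x*_Ay)=(\mathrm{id}\otimes L_A(x))\Delta_\succ(y)+(R_{\prec_A}(y)\otimes\mathrm{id})\Delta_\succ(x)$; (3) $\beta_\prec(a^**_{A^*}b^* )=(\mathrm{id}\otimes L_{\succ_{A^*}}(a^* ))\beta_\prec(b^* )+(R_{A^*}(b^* )\otimes\mathrm{id})\beta_\prec(a^* )$; (4) $\beta_\succ(a^**_{A^*}b^* )=(\mathrm{id}\otimes L_{A^*}(a^* ))\beta_\succ(b^* )+(R_{\prec_{A^*}}(b^* )\otimes\mathrm{id})\beta_\succ(a^* )$; (5) $(L_A(x)\otimes\mathrm{id}-\mathrm{id}\otimes R_{\prec_A}(x))\Delta_\prec(y)+\sigma[(L_{\succ_A}(y)\otimes\mathrm{id}-\mathrm{id}\otimes R_A(y))\Delta_\succ(x)]=0$; (6) $(L_{A^*}(a^* )\otimes\mathrm{id}-\mathrm{id}\otimes R_{\prec_{A^*}}(a^* ))\beta_\prec(b^* )+\sigma[(L_{\succ_{A^*}}(b^* )\otimes\mathrm{id}-\mathrm{id}\otimes R_{A^*}(b^* ))\beta_\succ(a^* )]=0$. *)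

theory Defs
  imports Main
begin

text \<open>
Finite-dimensional vector spaces over a field 'k are modelled in coordinates:
a basis is indexed by a finite type 'i, a vector of A is a function 'i => 'k,
the dual space A* is identified with 'i => 'k via the dual basis and the
pairing pair a x = sum_i a_i x_i.  Elements of A (x) A are 'i => 'i => 'k
(coefficients w.r.t. e_i (x) e_j), elements of A (x) A (x) A are
'i => 'i => 'i => 'k.  A bilinear product is given by structure constants
c i j k = k-th coordinate of e_i . e_j.
\<close>

definition bvec :: "'i \<Rightarrow> 'i \<Rightarrow> 'k::field" where
  "bvec i = (\<lambda>j. if j = i then 1 else 0)"

definition pair :: "('i::finite \<Rightarrow> 'k::field) \<Rightarrow> ('i \<Rightarrow> 'k) \<Rightarrow> 'k" where
  "pair a x = (\<Sum>i\<in>UNIV. a i * x i)"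

definition bprod :: "('i::finite \<Rightarrow> 'i \<Rightarrow> 'i \<Rightarrow> 'k::field) \<Rightarrow> ('i \<Rightarrow> 'k) \<Rightarrow> ('i \<Rightarrow> 'k) \<Rightarrow> ('i \<Rightarrow> 'k)" where
  "bprod c x y = (\<lambda>k. \<Sum>i\<in>UNIV. \<Sum>j\<in>UNIV. x i * y j * c i j k)"

text \<open>associated product x * y = x \<succ> y + x \<prec> y (cs: constants of \<succ>, cp: constants of \<prec>)\<close>
definition aprod :: "('i::finite \<Rightarrow> 'i \<Rightarrow> 'i \<Rightarrow> 'k::field) \<Rightarrow> ('i \<Rightarrow> 'i \<Rightarrow> 'i \<Rightarrow> 'k) \<Rightarrow> ('i \<Rightarrow> 'k) \<Rightarrow> ('i \<Rightarrow> 'k) \<Rightarrow> ('i \<Rightarrow> 'k)" where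
  "aprod cs cp x y = (\<lambda>k. bprod cs x y k + bprod cp x y k)"

definition dendriform :: "('i::finite \<Rightarrow> 'i \<Rightarrow> 'i \<Rightarrow> 'k::field) \<Rightarrow> ('i \<Rightarrow> 'i \<Rightarrow> 'i \<Rightarrow> 'k) \<Rightarrow> bool" where
  "dendriform cs cp \<longleftrightarrow>
    (\<forall>x y z.
      bprod cp (bprod cp x y) z = bprod cp x (aprod cs cp y z) \<and>
      bprod cp (bprod cs x y) z = bprod cs x (bprod cp y z) \<and>
      bprod cs x (bprod cs y z) = bprod cs (aprod cs cp x y) z)"

definition tens2 :: "('i \<Rightarrow> 'k::field) \<Rightarrow> ('i \<Rightarrow> 'k) \<Rightarrow> 'i \<Rightarrow> 'i \<Rightarrow> 'k" where
  "tens2 x y = (\<lambda>a b. x a * y b)"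

definition tens3 :: "('i \<Rightarrow> 'k::field) \<Rightarrow> ('i \<Rightarrow> 'k) \<Rightarrow> ('i \<Rightarrow> 'k) \<Rightarrow> 'i \<Rightarrow> 'i \<Rightarrow> 'i \<Rightarrow> 'k" where
  "tens3 x y z = (\<lambda>a b c. x a * y b * z c)"

text \<open>(f (x) g) t for linear maps f g (determined by their values on the basis)\<close>
definition tmap :: "(('i::finite \<Rightarrow> 'k::field) \<Rightarrow> ('i \<Rightarrow> 'k)) \<Rightarrow> (('i \<Rightarrow> 'k) \<Rightarrow> ('i \<Rightarrow> 'k)) \<Rightarrow> ('i \<Rightarrow> 'i \<Rightarrow> 'k) \<Rightarrow> 'i \<Rightarrow> 'i \<Rightarrow> 'k" where
  "tmap f g t = (\<lambda>a b. \<Sum>p\<in>UNIV. \<Sum>q\<in>UNIV. t p q * tens2 (f (bvec p)) (g (bvec q)) a b)"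

definition flip :: "('i \<Rightarrow> 'i \<Rightarrow> 'k) \<Rightarrow> 'i \<Rightarrow> 'i \<Rightarrow> 'k" where
  "flip t = (\<lambda>a b. t b a)"

definition t2add :: "('i \<Rightarrow> 'i \<Rightarrow> 'k::field) \<Rightarrow> ('i \<Rightarrow> 'i \<Rightarrow> 'k) \<Rightarrow> 'i \<Rightarrow> 'i \<Rightarrow> 'k" where
  "t2add s t = (\<lambda>a b. s a b + t a b)"

definition t2sub :: "('i \<Rightarrow> 'i \<Rightarrow> 'k::field) \<Rightarrow> ('i \<Rightarrow> 'i \<Rightarrow> 'k) \<Rightarrow> 'i \<Rightarrow> 'i \<Rightarrow> 'k" where
  "t2sub s t = (\<lambda>a b. s a b - t a b)"

definition Lop :: "('i::finite \<Rightarrow> 'i \<Rightarrow> 'i \<Rightarrow> 'k::field) \<Rightarrow> ('i \<Rightarrow> 'k) \<Rightarrow> ('i \<Rightarrow> 'k) \<Rightarrow> ('i \<Rightarrow> 'k)" where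
  "Lop c x = (\<lambda>y. bprod c x y)"

definition Rop :: "('i::finite \<Rightarrow> 'i \<Rightarrow> 'i \<Rightarrow> 'k::field) \<Rightarrow> ('i \<Rightarrow> 'k) \<Rightarrow> ('i \<Rightarrow> 'k) \<Rightarrow> ('i \<Rightarrow> 'k)" where
  "Rop c x = (\<lambda>y. bprod c y x)"

definition Lsum :: "('i::finite \<Rightarrow> 'i \<Rightarrow> 'i \<Rightarrow> 'k::field) \<Rightarrow> ('i \<Rightarrow> 'i \<Rightarrow> 'i \<Rightarrow> 'k) \<Rightarrow> ('i \<Rightarrow> 'k) \<Rightarrow> ('i \<Rightarrow> 'k) \<Rightarrow> ('i \<Rightarrow> 'k)" where
  "Lsum cs cp x = (\<lambda>y. aprod cs cp x y)"

definition Rsum :: "('i::finite \<Rightarrow> 'i \<Rightarrow> 'i \<Rightarrow> 'k::field) \<Rightarrow> ('i \<Rightarrow> 'i \<Rightarrow> 'i \<Rightarrow> 'k) \<Rightarrow> ('i \<Rightarrow> 'k) \<Rightarrow> ('i \<Rightarrow> 'k) \<Rightarrow> ('i \<Rightarrow> 'k)" where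
  "Rsum cs cp x = (\<lambda>y. aprod cs cp y x)"

text \<open>The comultiplication of A induced by a product on A* with structure constants d
  (in dual-basis coordinates): <Delta(x), a (x) b> = <x, a . b>.\<close>
definition cobr :: "('i::finite \<Rightarrow> 'i \<Rightarrow> 'i \<Rightarrow> 'k::field) \<Rightarrow> ('i \<Rightarrow> 'k) \<Rightarrow> 'i \<Rightarrow> 'i \<Rightarrow> 'k" where
  "cobr d x = (\<lambda>i j. pair x (bprod d (bvec i) (bvec j)))"

text \<open>Conditions (1),(2),(5) of a dendriform D-bialgebra for the algebra (cs,cp),
  with comultiplications induced by the products (ds,dp) on the dual.
  Applied with the roles swapped they give (3),(4),(6).\<close>
definition Dcond :: "('i::finite \<Rightarrow> 'i \<Rightarrow> 'i \<Rightarrow> 'k::field) \<Rightarrow> ('i \<Rightarrow> 'i \<Rightarrow> 'i \<Rightarrow> 'k)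
    \<Rightarrow> ('i \<Rightarrow> 'i \<Rightarrow> 'i \<Rightarrow> 'k) \<Rightarrow> ('i \<Rightarrow> 'i \<Rightarrow> 'i \<Rightarrow> 'k) \<Rightarrow> bool" where
  "Dcond cs cp ds dp \<longleftrightarrow>
    (\<forall>x y.
      cobr dp (aprod cs cp x y) =
        t2add (tmap id (Lop cs x) (cobr dp y)) (tmap (Rsum cs cp y) id (cobr dp x)) \<and>
      cobr ds (aprod cs cp x y) =
        t2add (tmap id (Lsum cs cp x) (cobr ds y)) (tmap (Rop cp y) id (cobr ds x)) \<and>
      t2add (t2sub (tmap (Lsum cs cp x) id (cobr dp y)) (tmap id (Rop cp x) (cobr dp y)))
            (flip (t2sub (tmap (Lop cs y) id (cobr ds x)) (tmap id (Rsum cs cp y) (cobr ds x))))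
        = (\<lambda>a b. 0))"

text \<open>(A, A*) with A given by (cs,cp), A* given by (ds,dp) in the dual basis.\<close>
definition D_bialgebra :: "('i::finite \<Rightarrow> 'i \<Rightarrow> 'i \<Rightarrow> 'k::field) \<Rightarrow> ('i \<Rightarrow> 'i \<Rightarrow> 'i \<Rightarrow> 'k)
    \<Rightarrow> ('i \<Rightarrow> 'i \<Rightarrow> 'i \<Rightarrow> 'k) \<Rightarrow> ('i \<Rightarrow> 'i \<Rightarrow> 'i \<Rightarrow> 'k) \<Rightarrow> bool" where
  "D_bialgebra cs cp ds dp \<longleftrightarrow>
     dendriform cs cp \<and> dendriform ds dp \<and> Dcond cs cp ds dp \<and> Dcond ds dp cs cp"

definition tsym :: "('i \<Rightarrow> 'i \<Rightarrow> 'k) \<Rightarrow> bool" where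
  "tsym r \<longleftrightarrow> flip r = r"

text \<open>r = sum_{(p,q)} x_{pq} (x) y_{pq} with x_{pq} = r p q e_p, y_{pq} = e_q\<close>
definition r12_star_r13 :: "('i::finite \<Rightarrow> 'i \<Rightarrow> 'i \<Rightarrow> 'k::field) \<Rightarrow> ('i \<Rightarrow> 'i \<Rightarrow> 'i \<Rightarrow> 'k) \<Rightarrow> ('i \<Rightarrow> 'i \<Rightarrow> 'k) \<Rightarrow> 'i \<Rightarrow> 'i \<Rightarrow> 'i \<Rightarrow> 'k" where
  "r12_star_r13 cs cp r = (\<lambda>a b c. \<Sum>p\<in>UNIV. \<Sum>q\<in>UNIV. \<Sum>s\<in>UNIV. \<Sum>t\<in>UNIV.
     r p q * r s t * tens3 (aprod cs cp (bvec p) (bvec s)) (bvec q) (bvec t) a b c)"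

definition r13_prec_r23 :: "('i::finite \<Rightarrow> 'i \<Rightarrow> 'i \<Rightarrow> 'k::field) \<Rightarrow> ('i \<Rightarrow> 'i \<Rightarrow> 'k) \<Rightarrow> 'i \<Rightarrow> 'i \<Rightarrow> 'i \<Rightarrow> 'k" where
  "r13_prec_r23 cp r = (\<lambda>a b c. \<Sum>p\<in>UNIV. \<Sum>q\<in>UNIV. \<Sum>s\<in>UNIV. \<Sum>t\<in>UNIV.
     r p q * r s t * tens3 (bvec p) (bvec s) (bprod cp (bvec q) (bvec t)) a b c)"

definition r23_succ_r12 :: "('i::finite \<Rightarrow> 'i \<Rightarrow> 'i \<Rightarrow> 'k::field) \<Rightarrow> ('i \<Rightarrow> 'i \<Rightarrow> 'k) \<Rightarrow> 'i \<Rightarrow> 'i \<Rightarrow> 'i \<Rightarrow> 'k" where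
  "r23_succ_r12 cs r = (\<lambda>a b c. \<Sum>p\<in>UNIV. \<Sum>q\<in>UNIV. \<Sum>s\<in>UNIV. \<Sum>t\<in>UNIV.
     r p q * r s t * tens3 (bvec s) (bprod cs (bvec p) (bvec t)) (bvec q) a b c)"

definition D_equation :: "('i::finite \<Rightarrow> 'i \<Rightarrow> 'i \<Rightarrow> 'k::field) \<Rightarrow> ('i \<Rightarrow> 'i \<Rightarrow> 'i \<Rightarrow> 'k) \<Rightarrow> ('i \<Rightarrow> 'i \<Rightarrow> 'k) \<Rightarrow> bool" where
  "D_equation cs cp r \<longleftrightarrow>
     r12_star_r13 cs cp r = (\<lambda>a b c. r13_prec_r23 cp r a b c + r23_succ_r12 cs r a b c)"

definition Delta_succ_r :: "('i::finite \<Rightarrow> 'i \<Rightarrow> 'i \<Rightarrow> 'k::field) \<Rightarrow> ('i \<Rightarrow> 'i \<Rightarrow> 'i \<Rightarrow> 'k) \<Rightarrow> ('i \<Rightarrow> 'i \<Rightarrow> 'k) \<Rightarrow> ('i \<Rightarrow> 'k) \<Rightarrow> 'i \<Rightarrow> 'i \<Rightarrow> 'k" where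
  "Delta_succ_r cs cp r x = (\<lambda>a b. - t2sub (tmap id (Lsum cs cp x) r) (tmap (Rop cp x) id r) a b)"

definition Delta_prec_r :: "('i::finite \<Rightarrow> 'i \<Rightarrow> 'i \<Rightarrow> 'k::field) \<Rightarrow> ('i \<Rightarrow> 'i \<Rightarrow> 'i \<Rightarrow> 'k) \<Rightarrow> ('i \<Rightarrow> 'i \<Rightarrow> 'k) \<Rightarrow> ('i \<Rightarrow> 'k) \<Rightarrow> 'i \<Rightarrow> 'i \<Rightarrow> 'k" where
  "Delta_prec_r cs cp r x = t2sub (tmap id (Lop cs x) r) (tmap (Rsum cs cp x) id r)"

text \<open>Structure constants of the induced products on A*:
  <a \<succ> b, e_k> = <a (x) b, Delta_succ(e_k)>, i.e. (e^i \<succ> e^j)_k = Delta_succ(e_k)_{ij}.\<close>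
definition dual_succ :: "('i::finite \<Rightarrow> 'i \<Rightarrow> 'i \<Rightarrow> 'k::field) \<Rightarrow> ('i \<Rightarrow> 'i \<Rightarrow> 'i \<Rightarrow> 'k) \<Rightarrow> ('i \<Rightarrow> 'i \<Rightarrow> 'k) \<Rightarrow> 'i \<Rightarrow> 'i \<Rightarrow> 'i \<Rightarrow> 'k" where
  "dual_succ cs cp r = (\<lambda>i j k. Delta_succ_r cs cp r (bvec k) i j)"

definition dual_prec :: "('i::finite \<Rightarrow> 'i \<Rightarrow> 'i \<Rightarrow> 'k::field) \<Rightarrow> ('i \<Rightarrow> 'i \<Rightarrow> 'i \<Rightarrow> 'k) \<Rightarrow> ('i \<Rightarrow> 'i \<Rightarrow> 'k) \<Rightarrow> 'i \<Rightarrow> 'i \<Rightarrow> 'i \<Rightarrow> 'k" where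
  "dual_prec cs cp r = (\<lambda>i j k. Delta_prec_r cs cp r (bvec k) i j)"

end

theory Submission
  imports Defs
begin

lemma bvec_sum1[simp]: "(\<Sum>m\<in>UNIV. u m * bvec m a) = (u a)" for u :: "'i::finite \<Rightarrow> 'k::field"
proof -
  have e: "(\<lambda>m. u m * bvec m a) = (\<lambda>m. if m = a then u a else 0)" by (auto simp: bvec_def)
  show ?thesis by (subst e) simp
qed
lemma bvec_sum2[simp]: "(\<Sum>m\<in>UNIV. bvec p m * u m) = (u p)" for u :: "'i::finite \<Rightarrow> 'k::field"
proof -
  have e: "(\<lambda>m. bvec p m * u m) = (\<lambda>m. if m = p then u p else 0)" by (auto simp: bvec_def)
  show ?thesis by (subst e) simp
qed
lemma bvec_sum3[simp]: "(\<Sum>m\<in>UNIV. bvec m a * u m) = (u a)" for u :: "'i::finite \<Rightarrow> 'k::field"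
proof -
  have e: "(\<lambda>m. bvec m a * u m) = (\<lambda>m. if m = a then u a else 0)" by (auto simp: bvec_def)
  show ?thesis by (subst e) simp
qed
lemma bvec_sum4[simp]: "(\<Sum>m\<in>UNIV. u m * bvec p m) = (u p)" for u :: "'i::finite \<Rightarrow> 'k::field"
proof -
  have e: "(\<lambda>m. u m * bvec p m) = (\<lambda>m. if m = p then u p else 0)" by (auto simp: bvec_def)
  show ?thesis by (subst e) simp
qed


lemma sum_rot3: "(\<Sum>a\<in>A. \<Sum>b\<in>B. \<Sum>c\<in>C. F a b c) = (\<Sum>c\<in>C. \<Sum>a\<in>A. \<Sum>b\<in>B. F a b c)"
proof -
  have "(\<Sum>a\<in>A. \<Sum>b\<in>B. \<Sum>c\<in>C. F a b c) = (\<Sum>a\<in>A. \<Sum>c\<in>C. \<Sum>b\<in>B. F a b c)"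
    by (rule sum.cong[OF refl], rule sum.swap)
  also have "\<dots> = (\<Sum>c\<in>C. \<Sum>a\<in>A. \<Sum>b\<in>B. F a b c)" by (rule sum.swap)
  finally show ?thesis .
qed
lemma sum_rot4: "(\<Sum>a\<in>A. \<Sum>b\<in>B. \<Sum>c\<in>C. \<Sum>d\<in>D. F a b c d) = (\<Sum>d\<in>D. \<Sum>a\<in>A. \<Sum>b\<in>B. \<Sum>c\<in>C. F a b c d)"
proof -
  have "(\<Sum>a\<in>A. \<Sum>b\<in>B. \<Sum>c\<in>C. \<Sum>d\<in>D. F a b c d) = (\<Sum>a\<in>A. \<Sum>d\<in>D. \<Sum>b\<in>B. \<Sum>c\<in>C. F a b c d)"
    by (rule sum.cong[OF refl], rule sum_rot3)
  also have "\<dots> = (\<Sum>d\<in>D. \<Sum>a\<in>A. \<Sum>b\<in>B. \<Sum>c\<in>C. F a b c d)" by (rule sum.swap)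
  finally show ?thesis .
qed
lemma sum_swap22: "(\<Sum>a\<in>A. \<Sum>b\<in>B. \<Sum>c\<in>C. \<Sum>d\<in>D. F a b c d) = (\<Sum>c\<in>C. \<Sum>d\<in>D. \<Sum>a\<in>A. \<Sum>b\<in>B. F a b c d)"
  by (subst sum_rot4, subst sum_rot4, rule refl)

lemma bprod_bvec1: "bprod c (bvec m) y k = (\<Sum>j\<in>UNIV. y j * c m j k)"
  unfolding bprod_def by (subst sum.swap) (simp add: mult.assoc)
lemma bprod_bvec2: "bprod c x (bvec m) k = (\<Sum>i\<in>UNIV. x i * c i m k)"
  unfolding bprod_def by (simp add: mult.assoc sum_distrib_left[symmetric])

lemma bprod_lin1: "bprod c x y k = (\<Sum>m\<in>UNIV. x m * bprod c (bvec m) y k)"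
  by (simp add: bprod_bvec1) (simp add: bprod_def sum_distrib_left mult.assoc)
lemma bprod_lin2: "bprod c x y k = (\<Sum>m\<in>UNIV. y m * bprod c x (bvec m) k)"
proof -
  have "(\<Sum>m\<in>UNIV. y m * bprod c x (bvec m) k) = (\<Sum>m\<in>UNIV. y m * (\<Sum>i\<in>UNIV. x i * c i m k))"
    by (simp add: bprod_bvec2)
  also have "\<dots> = (\<Sum>m\<in>UNIV. \<Sum>i\<in>UNIV. x i * y m * c i m k)" by (simp add: sum_distrib_left ac_simps)
  also have "\<dots> = (\<Sum>i\<in>UNIV. \<Sum>m\<in>UNIV. x i * y m * c i m k)" by (rule sum.swap)
  also have "\<dots> = bprod c x y k" by (simp add: bprod_def)
  finally show ?thesis by simp
qed


lemma aprod_lin1: "aprod cs cp x y k = (\<Sum>m\<in>UNIV. x m * aprod cs cp (bvec m) y k)"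
  by (simp add: aprod_def bprod_lin1[of cs x] bprod_lin1[of cp x] distrib_left sum.distrib)
lemma aprod_lin2: "aprod cs cp x y k = (\<Sum>m\<in>UNIV. y m * aprod cs cp x (bvec m) k)"
  by (simp add: aprod_def bprod_lin2[of cs x y] bprod_lin2[of cp x y] distrib_left sum.distrib)

definition islin :: "(('i::finite \<Rightarrow> 'k::field) \<Rightarrow> 'i \<Rightarrow> 'k) \<Rightarrow> bool" where
  "islin f \<longleftrightarrow> (\<forall>u a. f u a = (\<Sum>m\<in>UNIV. u m * f (bvec m) a))"

lemma islinD: "islin f \<Longrightarrow> f u a = (\<Sum>m\<in>UNIV. u m * f (bvec m) a)"
  unfolding islin_def by blast

lemma islin_id[simp]: "islin (id :: ('i::finite \<Rightarrow> 'k::field) \<Rightarrow> _)"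
  by (simp add: islin_def)
lemma islin_Lop[simp]: "islin (Lop c x)"
  unfolding islin_def Lop_def by (intro allI) (rule bprod_lin2)
lemma islin_Rop[simp]: "islin (Rop c x)"
  unfolding islin_def Rop_def by (intro allI) (rule bprod_lin1)
lemma islin_Lsum[simp]: "islin (Lsum cs cp x)"
  unfolding islin_def Lsum_def by (intro allI) (rule aprod_lin2)
lemma islin_Rsum[simp]: "islin (Rsum cs cp x)"
  unfolding islin_def Rsum_def by (intro allI) (rule aprod_lin1)
lemma islin_comp[simp]: assumes f: "islin f" and g: "islin g" shows "islin (f \<circ> g)"
  unfolding islin_def
proof (intro allI)
  fix u a
  have "(f \<circ> g) u a = (\<Sum>m\<in>UNIV. g u m * f (bvec m) a)" unfolding comp_def by (rule islinD[OF f])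
  also have "\<dots> = (\<Sum>m\<in>UNIV. (\<Sum>n\<in>UNIV. u n * g (bvec n) m) * f (bvec m) a)"
    by (subst islinD[OF g, of u]) (rule refl)
  also have "\<dots> = (\<Sum>m\<in>UNIV. \<Sum>n\<in>UNIV. u n * (g (bvec n) m * f (bvec m) a))"
    by (simp add: sum_distrib_right mult.assoc)
  also have "\<dots> = (\<Sum>n\<in>UNIV. \<Sum>m\<in>UNIV. u n * (g (bvec n) m * f (bvec m) a))"
    by (rule sum.swap)
  also have "\<dots> = (\<Sum>n\<in>UNIV. u n * (\<Sum>m\<in>UNIV. g (bvec n) m * f (bvec m) a))"
    by (simp add: sum_distrib_left)
  also have "\<dots> = (\<Sum>n\<in>UNIV. u n * (f \<circ> g) (bvec n) a)"
    unfolding comp_def by (subst islinD[OF f, of "g (bvec _)" a]) (rule refl)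
  finally show "(f \<circ> g) u a = (\<Sum>m\<in>UNIV. u m * (f \<circ> g) (bvec m) a)" .
qed

context
  fixes cs cp :: "'i::finite \<Rightarrow> 'i \<Rightarrow> 'i \<Rightarrow> 'k::field"
  assumes dend: "dendriform cs cp"
begin

lemma ax1: "bprod cp (bprod cp x y) z = bprod cp x (aprod cs cp y z)"
  using dend by (simp add: dendriform_def)
lemma ax2: "bprod cp (bprod cs x y) z = bprod cs x (bprod cp y z)"
  using dend by (simp add: dendriform_def)
lemma ax3: "bprod cs x (bprod cs y z) = bprod cs (aprod cs cp x y) z"
  using dend by (simp add: dendriform_def)

end

lemma bprod_add1: "bprod c (\<lambda>k. x k + y k) z = (\<lambda>k. bprod c x z k + bprod c y z k)"
  by (simp add: bprod_def distrib_left distrib_right sum.distrib)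
lemma bprod_add2: "bprod c x (\<lambda>k. y k + z k) = (\<lambda>k. bprod c x y k + bprod c x z k)"
  by (simp add: bprod_def distrib_left distrib_right sum.distrib)

lemma assoc: assumes dend: "dendriform cs cp"
  shows "aprod cs cp (aprod cs cp x y) z = aprod cs cp x (aprod cs cp y z)"
proof (rule ext)
  fix k
  have "aprod cs cp (aprod cs cp x y) z k =
     bprod cs (aprod cs cp x y) z k + bprod cp (bprod cs x y) z k + bprod cp (bprod cp x y) z k"
  proof -
    have "bprod cp (aprod cs cp x y) z k = bprod cp (bprod cs x y) z k + bprod cp (bprod cp x y) z k"
      by (simp add: aprod_def[of cs cp x y] bprod_add1)
    then show ?thesis unfolding aprod_def[of cs cp "aprod cs cp x y" z] by simp
  qed
  also have "\<dots> = bprod cs x (bprod cs y z) k + bprod cs x (bprod cp y z) k + bprod cp x (aprod cs cp y z) k"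
    by (simp add: ax1[OF dend] ax2[OF dend] ax3[OF dend])
  also have "\<dots> = aprod cs cp x (aprod cs cp y z) k"
    by (simp add: aprod_def[of cs cp x] aprod_def[of cs cp y z] bprod_add2)
  finally show "aprod cs cp (aprod cs cp x y) z k = aprod cs cp x (aprod cs cp y z) k" .
qed


lemma tmap_expl: "tmap f g t a b = (\<Sum>p\<in>UNIV. \<Sum>q\<in>UNIV. t p q * (f (bvec p) a * g (bvec q) b))"
  by (simp add: tmap_def tens2_def)

lemma prod_sums: "(c::'k::field) * ((\<Sum>m\<in>A. f m) * (\<Sum>n\<in>B. g n)) = (\<Sum>m\<in>A. \<Sum>n\<in>B. c * (f m * g n))"
proof -
  have "(\<Sum>m\<in>A. f m) * (\<Sum>n\<in>B. g n) = (\<Sum>m\<in>A. \<Sum>n\<in>B. f m * g n)" by (rule sum_product)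
  then show ?thesis by (simp add: sum_distrib_left)
qed

lemma tmap_comp:
  assumes f: "islin f" and g: "islin g"
  shows "tmap f g (tmap f' g' t) = tmap (f \<circ> f') (g \<circ> g') t"
proof (intro ext)
  fix a b
  have "tmap f g (tmap f' g' t) a b =
    (\<Sum>m\<in>UNIV. \<Sum>n\<in>UNIV. \<Sum>p\<in>UNIV. \<Sum>q\<in>UNIV. t p q * ((f' (bvec p) m * f (bvec m) a) * (g' (bvec q) n * g (bvec n) b)))"
    unfolding tmap_expl by (simp add: sum_distrib_left sum_distrib_right ac_simps)
  also have "\<dots> = (\<Sum>p\<in>UNIV. \<Sum>q\<in>UNIV. \<Sum>m\<in>UNIV. \<Sum>n\<in>UNIV. t p q * ((f' (bvec p) m * f (bvec m) a) * (g' (bvec q) n * g (bvec n) b)))"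
    by (rule sum_swap22)
  also have "\<dots> = (\<Sum>p\<in>UNIV. \<Sum>q\<in>UNIV. t p q * ((\<Sum>m\<in>UNIV. f' (bvec p) m * f (bvec m) a) * (\<Sum>n\<in>UNIV. g' (bvec q) n * g (bvec n) b)))"
    by (simp only: prod_sums)
  also have "\<dots> = tmap (f \<circ> f') (g \<circ> g') t a b"
    by (simp add: tmap_expl islinD[OF f, of "f' _"] islinD[OF g, of "g' _"])
  finally show "tmap f g (tmap f' g' t) a b = tmap (f \<circ> f') (g \<circ> g') t a b" .
qed

lemma tmap_sub: "tmap f g (t2sub s t) = t2sub (tmap f g s) (tmap f g t)"
  by (simp add: tmap_expl t2sub_def fun_eq_iff left_diff_distrib sum_subtractf)
lemma tmap_add: "tmap f g (t2add s t) = t2add (tmap f g s) (tmap f g t)"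
  by (simp add: tmap_expl t2add_def fun_eq_iff distrib_right sum.distrib)
lemma tmap_neg: "tmap f g (\<lambda>a b. - t a b) = (\<lambda>a b. - tmap f g t a b)"
  by (simp add: tmap_expl fun_eq_iff sum_negf)
lemma tmap_cong: "(\<And>p. f (bvec p) = f' (bvec p)) \<Longrightarrow> (\<And>q. g (bvec q) = g' (bvec q)) \<Longrightarrow> tmap f g t = tmap f' g' t"
  by (simp add: tmap_def)
lemma tmap_addf: "tmap (\<lambda>u k. f1 u k + f2 u k) g t = t2add (tmap f1 g t) (tmap f2 g t)"
  by (simp add: tmap_expl t2add_def fun_eq_iff distrib_left distrib_right sum.distrib)
lemma tmap_addg: "tmap f (\<lambda>u k. g1 u k + g2 u k) t = t2add (tmap f g1 t) (tmap f g2 t)"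
  by (simp add: tmap_expl t2add_def fun_eq_iff distrib_left distrib_right sum.distrib)
lemma tsymD: "tsym r \<Longrightarrow> r b a = r a b"
  unfolding tsym_def flip_def by (metis)

lemma flip_tmap: assumes "tsym r" shows "flip (tmap f g r) = tmap g f r"
proof (intro ext)
  fix a b
  have "flip (tmap f g r) a b = (\<Sum>q\<in>UNIV. \<Sum>p\<in>UNIV. r p q * (f (bvec p) b * g (bvec q) a))"
    unfolding flip_def tmap_expl by (rule sum.swap)
  also have "\<dots> = tmap g f r a b"
    unfolding tmap_expl by (simp add: tsymD[OF assms] mult.commute)
  finally show "flip (tmap f g r) a b = tmap g f r a b" .
qed

lemma tmap_lin_g: assumes "\<And>w b. G x w b = (\<Sum>m\<in>UNIV. x m * G (bvec m) w b)"
  shows "tmap f (G x) t a b = (\<Sum>m\<in>UNIV. x m * tmap f (G (bvec m)) t a b)"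
proof -
  have "tmap f (G x) t a b = (\<Sum>p\<in>UNIV. \<Sum>q\<in>UNIV. \<Sum>m\<in>UNIV. x m * (t p q * (f (bvec p) a * G (bvec m) (bvec q) b)))"
    unfolding tmap_expl by (subst assms) (simp add: sum_distrib_left ac_simps)
  also have "\<dots> = (\<Sum>m\<in>UNIV. \<Sum>p\<in>UNIV. \<Sum>q\<in>UNIV. x m * (t p q * (f (bvec p) a * G (bvec m) (bvec q) b)))"
    by (rule sum_rot3)
  also have "\<dots> = (\<Sum>m\<in>UNIV. x m * tmap f (G (bvec m)) t a b)"
    unfolding tmap_expl by (simp add: sum_distrib_left)
  finally show ?thesis .
qed
lemma tmap_lin_f: assumes "\<And>w b. F x w b = (\<Sum>m\<in>UNIV. x m * F (bvec m) w b)"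
  shows "tmap (F x) g t a b = (\<Sum>m\<in>UNIV. x m * tmap (F (bvec m)) g t a b)"
proof -
  have "tmap (F x) g t a b = (\<Sum>p\<in>UNIV. \<Sum>q\<in>UNIV. \<Sum>m\<in>UNIV. x m * (t p q * (F (bvec m) (bvec p) a * g (bvec q) b)))"
    unfolding tmap_expl by (subst assms) (simp add: sum_distrib_left sum_distrib_right ac_simps)
  also have "\<dots> = (\<Sum>m\<in>UNIV. \<Sum>p\<in>UNIV. \<Sum>q\<in>UNIV. x m * (t p q * (F (bvec m) (bvec p) a * g (bvec q) b)))"
    by (rule sum_rot3)
  also have "\<dots> = (\<Sum>m\<in>UNIV. x m * tmap (F (bvec m)) g t a b)"
    unfolding tmap_expl by (simp add: sum_distrib_left)
  finally show ?thesis .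
qed

lemma Dp_lin: "Delta_prec_r cs cp r x a b = (\<Sum>m\<in>UNIV. x m * Delta_prec_r cs cp r (bvec m) a b)"
  unfolding Delta_prec_r_def t2sub_def
  apply (subst tmap_lin_g[where G="Lop cs"], unfold Lop_def, rule bprod_lin1)
  apply (subst tmap_lin_f[where F="Rsum cs cp"], unfold Rsum_def, rule aprod_lin2)
  by (simp add: right_diff_distrib sum_subtractf)
lemma Ds_lin: "Delta_succ_r cs cp r x a b = (\<Sum>m\<in>UNIV. x m * Delta_succ_r cs cp r (bvec m) a b)"
  unfolding Delta_succ_r_def t2sub_def
  apply (subst tmap_lin_g[where G="Lsum cs cp"], unfold Lsum_def, rule aprod_lin1)
  apply (subst tmap_lin_f[where F="Rop cp"], unfold Rop_def, rule bprod_lin2)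
  by (simp add: right_diff_distrib sum_subtractf sum_negf)

lemma bprod_bvecs: "bprod c (bvec i) (bvec j) k = c i j k"
  by (simp add: bprod_bvec1)

lemma cobr_dual_prec: "cobr (dual_prec cs cp r) x = Delta_prec_r cs cp r x"
  by (simp add: fun_eq_iff cobr_def pair_def bprod_bvecs dual_prec_def Dp_lin[of _ _ _ x])
lemma cobr_dual_succ: "cobr (dual_succ cs cp r) x = Delta_succ_r cs cp r x"
  by (simp add: fun_eq_iff cobr_def pair_def bprod_bvecs dual_succ_def Ds_lin[of _ _ _ x])


lemma flip_sub: "flip (t2sub A B) = t2sub (flip A) (flip B)" by (simp add: flip_def t2sub_def)
lemma flip_add: "flip (t2add A B) = t2add (flip A) (flip B)" by (simp add: flip_def t2add_def)
lemma flip_neg: "flip (\<lambda>a b. - T a b) = (\<lambda>a b. - flip T a b)" by (simp add: flip_def)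

context
  fixes cs cp :: "'i::finite \<Rightarrow> 'i \<Rightarrow> 'i \<Rightarrow> 'k::field"
  assumes dend: "dendriform cs cp"
begin

lemma Lop_aprod: "Lop cs (aprod cs cp x y) = Lop cs x \<circ> Lop cs y"
  by (simp add: fun_eq_iff Lop_def ax3[OF dend])
lemma Rsum_aprod: "Rsum cs cp (aprod cs cp x y) = Rsum cs cp y \<circ> Rsum cs cp x"
  by (simp add: fun_eq_iff Rsum_def assoc[OF dend])
lemma Lsum_aprod: "Lsum cs cp (aprod cs cp x y) = Lsum cs cp x \<circ> Lsum cs cp y"
  by (simp add: fun_eq_iff Lsum_def assoc[OF dend])
lemma Rop_aprod: "Rop cp (aprod cs cp x y) = Rop cp y \<circ> Rop cp x"
  by (simp add: fun_eq_iff Rop_def ax1[OF dend])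
lemma comm1: "Rsum cs cp y \<circ> Lsum cs cp x = Lsum cs cp x \<circ> Rsum cs cp y"
  by (simp add: fun_eq_iff Rsum_def Lsum_def assoc[OF dend])
lemma comm2: "Lop cs y \<circ> Rop cp x = Rop cp x \<circ> Lop cs y"
  by (simp add: fun_eq_iff Rop_def Lop_def ax2[OF dend])

lemma cond1: "cobr (dual_prec cs cp r) (aprod cs cp x y) =
   t2add (tmap id (Lop cs x) (cobr (dual_prec cs cp r) y)) (tmap (Rsum cs cp y) id (cobr (dual_prec cs cp r) x))"
  unfolding cobr_dual_prec Delta_prec_r_def
  apply (simp only: tmap_sub)
  by (simp add: tmap_comp Lop_aprod Rsum_aprod fun_eq_iff t2add_def t2sub_def)

lemma cond2: "cobr (dual_succ cs cp r) (aprod cs cp x y) =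
   t2add (tmap id (Lsum cs cp x) (cobr (dual_succ cs cp r) y)) (tmap (Rop cp y) id (cobr (dual_succ cs cp r) x))"
  unfolding cobr_dual_succ Delta_succ_r_def
  apply (simp only: tmap_neg tmap_sub)
  by (simp add: tmap_comp Lsum_aprod Rop_aprod fun_eq_iff t2add_def t2sub_def)

lemma cond5: assumes sym: "tsym r" shows
  "t2add (t2sub (tmap (Lsum cs cp x) id (cobr (dual_prec cs cp r) y)) (tmap id (Rop cp x) (cobr (dual_prec cs cp r) y)))
         (flip (t2sub (tmap (Lop cs y) id (cobr (dual_succ cs cp r) x)) (tmap id (Rsum cs cp y) (cobr (dual_succ cs cp r) x))))
     = (\<lambda>a b. 0)"
  unfolding cobr_dual_succ Delta_succ_r_def cobr_dual_prec Delta_prec_r_def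
  apply (simp only: tmap_neg tmap_sub flip_sub flip_neg)
  apply (simp add: tmap_comp)
  apply (simp only: flip_tmap[OF sym] flip_sub flip_neg)
  by (simp add: comm1 comm2 fun_eq_iff t2add_def t2sub_def)

end


lemma tmap_idl: "tmap id g T i j = (\<Sum>q\<in>UNIV. T i q * g (bvec q) j)"
proof -
  have "tmap id g T i j = (\<Sum>q\<in>UNIV. \<Sum>p\<in>UNIV. bvec p i * (T p q * g (bvec q) j))"
    unfolding tmap_expl by (subst sum.swap) (simp add: ac_simps)
  then show ?thesis by simp
qed
lemma tmap_idr: "tmap f id T i j = (\<Sum>p\<in>UNIV. T p j * f (bvec p) i)"
proof -
  have "tmap f id T i j = (\<Sum>p\<in>UNIV. \<Sum>q\<in>UNIV. bvec q j * (T p q * f (bvec p) i))"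
    unfolding tmap_expl by (simp add: ac_simps)
  then show ?thesis by simp
qed

lemma cobr_expl: "cobr c b i q = (\<Sum>v\<in>UNIV. b v * c i q v)"
  by (simp add: cobr_def pair_def bprod_bvecs)
lemma cobr_bvec: "cobr d (bvec j) u q = d u q j"
  by (simp add: cobr_expl)

lemma perm_qvu: "(\<Sum>q\<in>A. \<Sum>v\<in>B. \<Sum>u\<in>C. F q v u) = (\<Sum>u\<in>C. \<Sum>v\<in>B. \<Sum>q\<in>A. F q v u)"
proof -
  have "(\<Sum>q\<in>A. \<Sum>v\<in>B. \<Sum>u\<in>C. F q v u) = (\<Sum>u\<in>C. \<Sum>q\<in>A. \<Sum>v\<in>B. F q v u)" by (rule sum_rot3)
  also have "\<dots> = (\<Sum>u\<in>C. \<Sum>v\<in>B. \<Sum>q\<in>A. F q v u)" by (rule sum.cong[OF refl], rule sum.swap)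
  finally show ?thesis .
qed

lemma C1: "cobr c (bprod d a b) i j = (\<Sum>u\<in>UNIV. \<Sum>v\<in>UNIV. a u * b v * cobr d (bprod c (bvec i) (bvec j)) u v)"
proof -
  have "cobr c (bprod d a b) i j = (\<Sum>k\<in>UNIV. \<Sum>u\<in>UNIV. \<Sum>v\<in>UNIV. a u * b v * (d u v k * c i j k))"
    by (simp add: cobr_expl bprod_def sum_distrib_left sum_distrib_right ac_simps)
  also have "\<dots> = (\<Sum>u\<in>UNIV. \<Sum>v\<in>UNIV. \<Sum>k\<in>UNIV. a u * b v * (d u v k * c i j k))"
    by (rule sum_rot3[symmetric])
  also have "\<dots> = (\<Sum>u\<in>UNIV. \<Sum>v\<in>UNIV. a u * b v * cobr d (bprod c (bvec i) (bvec j)) u v)"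
    by (simp add: cobr_expl bprod_bvecs sum_distrib_left ac_simps)
  finally show ?thesis .
qed

lemma C2: "tmap id (Lop d a) (cobr c b) i j = (\<Sum>u\<in>UNIV. \<Sum>v\<in>UNIV. a u * b v * tmap id (Lop c (bvec i)) (cobr d (bvec j)) u v)"
proof -
  have "tmap id (Lop d a) (cobr c b) i j = (\<Sum>q\<in>UNIV. \<Sum>v\<in>UNIV. \<Sum>u\<in>UNIV. a u * b v * (d u q j * c i q v))"
    by (simp add: tmap_idl cobr_expl Lop_def bprod_bvec2 sum_distrib_left sum_distrib_right ac_simps)
  also have "\<dots> = (\<Sum>u\<in>UNIV. \<Sum>v\<in>UNIV. \<Sum>q\<in>UNIV. a u * b v * (d u q j * c i q v))"
    by (rule perm_qvu)
  also have "\<dots> = (\<Sum>u\<in>UNIV. \<Sum>v\<in>UNIV. a u * b v * tmap id (Lop c (bvec i)) (cobr d (bvec j)) u v)"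
    by (simp add: tmap_idl cobr_bvec Lop_def bprod_bvecs sum_distrib_left ac_simps)
  finally show ?thesis .
qed

lemma C3: "tmap (Rop d b) id (cobr c a) i j = (\<Sum>u\<in>UNIV. \<Sum>v\<in>UNIV. a u * b v * tmap (Rop c (bvec j)) id (cobr d (bvec i)) u v)"
proof -
  have "tmap (Rop d b) id (cobr c a) i j = (\<Sum>m\<in>UNIV. \<Sum>v\<in>UNIV. \<Sum>u\<in>UNIV. a u * b v * (d m v i * c m j u))"
    by (simp add: tmap_idr cobr_expl Rop_def bprod_bvec1 sum_distrib_left sum_distrib_right ac_simps)
  also have "\<dots> = (\<Sum>u\<in>UNIV. \<Sum>v\<in>UNIV. \<Sum>m\<in>UNIV. a u * b v * (d m v i * c m j u))"
    by (rule perm_qvu)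
  also have "\<dots> = (\<Sum>u\<in>UNIV. \<Sum>v\<in>UNIV. a u * b v * tmap (Rop c (bvec j)) id (cobr d (bvec i)) u v)"
    by (simp add: tmap_idr cobr_bvec Rop_def bprod_bvecs sum_distrib_left ac_simps)
  finally show ?thesis .
qed

lemma C4: "tmap (Lop d a) id (cobr c b) i j = (\<Sum>u\<in>UNIV. \<Sum>v\<in>UNIV. a u * b v * tmap id (Rop c (bvec j)) (cobr d (bvec i)) u v)"
proof -
  have "tmap (Lop d a) id (cobr c b) i j = (\<Sum>m\<in>UNIV. \<Sum>v\<in>UNIV. \<Sum>u\<in>UNIV. a u * b v * (d u m i * c m j v))"
    by (simp add: tmap_idr cobr_expl Lop_def bprod_bvec2 sum_distrib_left sum_distrib_right ac_simps)
  also have "\<dots> = (\<Sum>u\<in>UNIV. \<Sum>v\<in>UNIV. \<Sum>m\<in>UNIV. a u * b v * (d u m i * c m j v))"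
    by (rule perm_qvu)
  also have "\<dots> = (\<Sum>u\<in>UNIV. \<Sum>v\<in>UNIV. a u * b v * tmap id (Rop c (bvec j)) (cobr d (bvec i)) u v)"
    by (simp add: tmap_idl cobr_bvec Rop_def bprod_bvecs sum_distrib_left ac_simps)
  finally show ?thesis .
qed

lemma C5: "tmap id (Rop d a) (cobr c b) i j = (\<Sum>u\<in>UNIV. \<Sum>v\<in>UNIV. a u * b v * tmap (Lop c (bvec i)) id (cobr d (bvec j)) v u)"
proof -
  have "tmap id (Rop d a) (cobr c b) i j = (\<Sum>m\<in>UNIV. \<Sum>v\<in>UNIV. \<Sum>u\<in>UNIV. a u * b v * (d m u j * c i m v))"
    by (simp add: tmap_idl cobr_expl Rop_def bprod_bvec1 sum_distrib_left sum_distrib_right ac_simps)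
  also have "\<dots> = (\<Sum>u\<in>UNIV. \<Sum>v\<in>UNIV. \<Sum>m\<in>UNIV. a u * b v * (d m u j * c i m v))"
    by (rule perm_qvu)
  also have "\<dots> = (\<Sum>u\<in>UNIV. \<Sum>v\<in>UNIV. a u * b v * tmap (Lop c (bvec i)) id (cobr d (bvec j)) v u)"
    by (simp add: tmap_idr cobr_bvec Lop_def bprod_bvecs sum_distrib_left ac_simps)
  finally show ?thesis .
qed


lemma tmap_plus: "tmap f g (\<lambda>a b. s a b + t a b) a b = tmap f g s a b + tmap f g t a b"
  using tmap_add[of f g s t] by (simp add: t2add_def fun_eq_iff)

lemma Lsum_split: "Lsum cs cp x = (\<lambda>w k. Lop cs x w k + Lop cp x w k)"
  by (simp add: Lsum_def Lop_def aprod_def)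
lemma Rsum_split: "Rsum cs cp x = (\<lambda>w k. Rop cs x w k + Rop cp x w k)"
  by (simp add: Rsum_def Rop_def aprod_def)

lemma Dt: "(\<lambda>a b. Delta_succ_r cs cp r x a b + Delta_prec_r cs cp r x a b) =
   t2sub (\<lambda>a b. - tmap id (Lop cp x) r a b) (tmap (Rop cs x) id r)"
  unfolding Delta_succ_r_def Delta_prec_r_def Lsum_split Rsum_split tmap_addf tmap_addg
  by (simp add: fun_eq_iff t2sub_def t2add_def)

context
  fixes cs cp :: "'i::finite \<Rightarrow> 'i \<Rightarrow> 'i \<Rightarrow> 'k::field"
  assumes dend: "dendriform cs cp"
begin

lemma Lop_pp: "Lop cp (bprod cp x y) = Lop cp x \<circ> Lsum cs cp y"
  by (simp add: fun_eq_iff Lop_def Lsum_def ax1[OF dend])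
lemma Rop_sp: "Rop cs (bprod cp x y) = Rop cp y \<circ> Rop cs x"
  by (simp add: fun_eq_iff Rop_def ax2[OF dend])
lemma Lop_ps: "Lop cp (bprod cs x y) = Lop cs x \<circ> Lop cp y"
  by (simp add: fun_eq_iff Lop_def ax2[OF dend])
lemma Rop_ss: "Rop cs (bprod cs x y) = Rop cs y \<circ> Rsum cs cp x"
  by (simp add: fun_eq_iff Rop_def Rsum_def ax3[OF dend])
lemma comm3: "Rop cp y \<circ> Lop cp x = Lop cp x \<circ> Rsum cs cp y"
  by (simp add: fun_eq_iff Rop_def Lop_def Rsum_def ax1[OF dend])
lemma comm4: "Rop cs x \<circ> Lsum cs cp y = Lop cs y \<circ> Rop cs x"
  by (simp add: fun_eq_iff Rop_def Lop_def Lsum_def ax3[OF dend])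

lemma Dt_tm: "tmap f g (Delta_succ_r cs cp r x) u v + tmap f g (Delta_prec_r cs cp r x) u v =
   tmap f g (t2sub (\<lambda>a b. - tmap id (Lop cp x) r a b) (tmap (Rop cs x) id r)) u v"
  by (simp only: tmap_plus[symmetric] Dt)

lemma A3: "Delta_succ_r cs cp r (bprod cp x y) u v + Delta_prec_r cs cp r (bprod cp x y) u v =
  tmap id (Lop cp x) (Delta_succ_r cs cp r y) u v +
   (tmap (Rop cp y) id (Delta_succ_r cs cp r x) u v + tmap (Rop cp y) id (Delta_prec_r cs cp r x) u v)"
  apply (simp only: Dt_tm)
  apply (subst fun_cong[OF fun_cong[OF Dt]])
  apply (simp only: Delta_succ_r_def tmap_neg tmap_sub)
  apply (simp add: tmap_comp Lop_pp Rop_sp t2sub_def)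
  done

lemma A4: "Delta_succ_r cs cp r (bprod cs x y) u v + Delta_prec_r cs cp r (bprod cs x y) u v =
  (tmap id (Lop cs x) (Delta_succ_r cs cp r y) u v + tmap id (Lop cs x) (Delta_prec_r cs cp r y) u v) +
   tmap (Rop cs y) id (Delta_prec_r cs cp r x) u v"
  apply (simp only: Dt_tm)
  apply (subst fun_cong[OF fun_cong[OF Dt]])
  apply (simp only: Delta_prec_r_def tmap_neg tmap_sub)
  apply (simp add: tmap_comp Lop_ps Rop_ss t2sub_def)
  done

lemma A6: assumes sym: "tsym r" shows
  "(tmap id (Rop cp y) (Delta_succ_r cs cp r x) u v + tmap id (Rop cp y) (Delta_prec_r cs cp r x) u v)
   - tmap (Lop cp x) id (Delta_prec_r cs cp r y) v u
   + (tmap id (Rop cs x) (Delta_succ_r cs cp r y) v u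
   - (tmap (Lop cs y) id (Delta_succ_r cs cp r x) u v + tmap (Lop cs y) id (Delta_prec_r cs cp r x) u v)) = 0"
proof -
  have f1: "tmap (Lop cp x) id (Delta_prec_r cs cp r y) v u = flip (tmap (Lop cp x) id (Delta_prec_r cs cp r y)) u v"
    by (simp add: flip_def)
  have f2: "tmap id (Rop cs x) (Delta_succ_r cs cp r y) v u = flip (tmap id (Rop cs x) (Delta_succ_r cs cp r y)) u v"
    by (simp add: flip_def)
  show ?thesis
    apply (simp only: Dt_tm f1 f2)
    apply (simp only: Delta_succ_r_def Delta_prec_r_def tmap_neg tmap_sub)
    apply (simp add: tmap_comp)
    apply (simp only: flip_tmap[OF sym] flip_sub flip_neg)
    apply (simp add: comm3 comm4 t2sub_def)
    done
qed

end


lemma cobr_aprod: "cobr c (aprod d1 d2 a b) i j = cobr c (bprod d1 a b) i j + cobr c (bprod d2 a b) i j"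
  by (simp add: cobr_def pair_def aprod_def distrib_right sum.distrib)
lemma sum2_add: "(\<Sum>u\<in>A. \<Sum>v\<in>B. a u * b v * X u v) + (\<Sum>u\<in>A. \<Sum>v\<in>B. a u * b v * Y u v) =
   (\<Sum>u\<in>A. \<Sum>v\<in>B. a u * b v * (X u v + Y u v :: 'k::field))"
  by (simp add: sum.distrib distrib_left)
lemma sum2_diff: "(\<Sum>u\<in>A. \<Sum>v\<in>B. a u * b v * X u v) - (\<Sum>u\<in>A. \<Sum>v\<in>B. a u * b v * Y u v) =
   (\<Sum>u\<in>A. \<Sum>v\<in>B. a u * b v * (X u v - Y u v :: 'k::field))"
  by (simp add: sum_subtractf right_diff_distrib)
lemma sum2_swap: "(\<Sum>u\<in>UNIV. \<Sum>v\<in>UNIV. b u * a v * X u v) = (\<Sum>u\<in>UNIV. \<Sum>v\<in>UNIV. a u * b v * X v u :: 'k::field)"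
  by (subst sum.swap) (simp add: ac_simps)

lemma C4s: "tmap (Lop d b) id (cobr c a) j i = (\<Sum>u\<in>UNIV. \<Sum>v\<in>UNIV. a u * b v * tmap id (Rop c (bvec i)) (cobr d (bvec j)) v u)"
  by (subst C4) (rule sum2_swap)
lemma C5s: "tmap id (Rop d b) (cobr c a) j i = (\<Sum>u\<in>UNIV. \<Sum>v\<in>UNIV. a u * b v * tmap (Lop c (bvec j)) id (cobr d (bvec i)) u v)"
  by (subst C5) (rule sum2_swap)

context
  fixes cs cp :: "'i::finite \<Rightarrow> 'i \<Rightarrow> 'i \<Rightarrow> 'k::field" and r :: "'i \<Rightarrow> 'i \<Rightarrow> 'k"
  assumes dend: "dendriform cs cp"
begin

lemma cond3: "cobr cp (aprod (dual_succ cs cp r) (dual_prec cs cp r) a b) =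
  t2add (tmap id (Lop (dual_succ cs cp r) a) (cobr cp b)) (tmap (Rsum (dual_succ cs cp r) (dual_prec cs cp r) b) id (cobr cp a))"
proof (intro ext)
  fix i j
  have L: "cobr cp (aprod (dual_succ cs cp r) (dual_prec cs cp r) a b) i j =
    (\<Sum>u\<in>UNIV. \<Sum>v\<in>UNIV. a u * b v * (Delta_succ_r cs cp r (bprod cp (bvec i) (bvec j)) u v + Delta_prec_r cs cp r (bprod cp (bvec i) (bvec j)) u v))"
    by (simp only: cobr_aprod C1[where c=cp and d="dual_succ cs cp r"] C1[where c=cp and d="dual_prec cs cp r"]
        cobr_dual_succ cobr_dual_prec sum2_add)
  have R: "t2add (tmap id (Lop (dual_succ cs cp r) a) (cobr cp b)) (tmap (Rsum (dual_succ cs cp r) (dual_prec cs cp r) b) id (cobr cp a)) i j =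
    (\<Sum>u\<in>UNIV. \<Sum>v\<in>UNIV. a u * b v * (tmap id (Lop cp (bvec i)) (Delta_succ_r cs cp r (bvec j)) u v +
       (tmap (Rop cp (bvec j)) id (Delta_succ_r cs cp r (bvec i)) u v + tmap (Rop cp (bvec j)) id (Delta_prec_r cs cp r (bvec i)) u v)))"
    by (simp only: t2add_def Rsum_split tmap_addf C2[where c=cp and d="dual_succ cs cp r"]
        C3[where c=cp and d="dual_succ cs cp r"] C3[where c=cp and d="dual_prec cs cp r"]
        cobr_dual_succ cobr_dual_prec sum2_add)
  show "cobr cp (aprod (dual_succ cs cp r) (dual_prec cs cp r) a b) i j =
    t2add (tmap id (Lop (dual_succ cs cp r) a) (cobr cp b)) (tmap (Rsum (dual_succ cs cp r) (dual_prec cs cp r) b) id (cobr cp a)) i j"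
    by (simp only: L R A3[OF dend])
qed

lemma cond4: "cobr cs (aprod (dual_succ cs cp r) (dual_prec cs cp r) a b) =
  t2add (tmap id (Lsum (dual_succ cs cp r) (dual_prec cs cp r) a) (cobr cs b)) (tmap (Rop (dual_prec cs cp r) b) id (cobr cs a))"
proof (intro ext)
  fix i j
  have L: "cobr cs (aprod (dual_succ cs cp r) (dual_prec cs cp r) a b) i j =
    (\<Sum>u\<in>UNIV. \<Sum>v\<in>UNIV. a u * b v * (Delta_succ_r cs cp r (bprod cs (bvec i) (bvec j)) u v + Delta_prec_r cs cp r (bprod cs (bvec i) (bvec j)) u v))"
    by (simp only: cobr_aprod C1[where c=cs and d="dual_succ cs cp r"] C1[where c=cs and d="dual_prec cs cp r"]
        cobr_dual_succ cobr_dual_prec sum2_add)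
  have R: "t2add (tmap id (Lsum (dual_succ cs cp r) (dual_prec cs cp r) a) (cobr cs b)) (tmap (Rop (dual_prec cs cp r) b) id (cobr cs a)) i j =
    (\<Sum>u\<in>UNIV. \<Sum>v\<in>UNIV. a u * b v * ((tmap id (Lop cs (bvec i)) (Delta_succ_r cs cp r (bvec j)) u v +
        tmap id (Lop cs (bvec i)) (Delta_prec_r cs cp r (bvec j)) u v) +
       tmap (Rop cs (bvec j)) id (Delta_prec_r cs cp r (bvec i)) u v))"
    by (simp only: t2add_def Lsum_split tmap_addg C2[where c=cs and d="dual_succ cs cp r"]
        C2[where c=cs and d="dual_prec cs cp r"] C3[where c=cs and d="dual_prec cs cp r"]
        cobr_dual_succ cobr_dual_prec sum2_add)
  show "cobr cs (aprod (dual_succ cs cp r) (dual_prec cs cp r) a b) i j =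
    t2add (tmap id (Lsum (dual_succ cs cp r) (dual_prec cs cp r) a) (cobr cs b)) (tmap (Rop (dual_prec cs cp r) b) id (cobr cs a)) i j"
    by (simp only: L R A4[OF dend])
qed

lemma cond6: assumes sym: "tsym r" shows
  "t2add (t2sub (tmap (Lsum (dual_succ cs cp r) (dual_prec cs cp r) a) id (cobr cp b)) (tmap id (Rop (dual_prec cs cp r) a) (cobr cp b)))
     (flip (t2sub (tmap (Lop (dual_succ cs cp r) b) id (cobr cs a)) (tmap id (Rsum (dual_succ cs cp r) (dual_prec cs cp r) b) (cobr cs a))))
   = (\<lambda>a b. 0)"
proof (intro ext)
  fix i j
  have "t2add (t2sub (tmap (Lsum (dual_succ cs cp r) (dual_prec cs cp r) a) id (cobr cp b)) (tmap id (Rop (dual_prec cs cp r) a) (cobr cp b)))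
     (flip (t2sub (tmap (Lop (dual_succ cs cp r) b) id (cobr cs a)) (tmap id (Rsum (dual_succ cs cp r) (dual_prec cs cp r) b) (cobr cs a)))) i j
   = (\<Sum>u\<in>UNIV. \<Sum>v\<in>UNIV. a u * b v * (
      (tmap id (Rop cp (bvec j)) (Delta_succ_r cs cp r (bvec i)) u v + tmap id (Rop cp (bvec j)) (Delta_prec_r cs cp r (bvec i)) u v)
      - tmap (Lop cp (bvec i)) id (Delta_prec_r cs cp r (bvec j)) v u
      + (tmap id (Rop cs (bvec i)) (Delta_succ_r cs cp r (bvec j)) v u
      - (tmap (Lop cs (bvec j)) id (Delta_succ_r cs cp r (bvec i)) u v + tmap (Lop cs (bvec j)) id (Delta_prec_r cs cp r (bvec i)) u v))))"
    by (simp only: t2add_def t2sub_def flip_def Lsum_split Rsum_split tmap_addf tmap_addg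
        C4[where c=cp and d="dual_succ cs cp r"] C4[where c=cp and d="dual_prec cs cp r"]
        C5[where c=cp and d="dual_prec cs cp r"] C4s[where c=cs and d="dual_succ cs cp r"]
        C5s[where c=cs and d="dual_succ cs cp r"] C5s[where c=cs and d="dual_prec cs cp r"]
        cobr_dual_succ cobr_dual_prec sum2_add sum2_diff)
  also have "\<dots> = 0" by (simp only: A6[OF dend sym]) simp
  finally show "t2add (t2sub (tmap (Lsum (dual_succ cs cp r) (dual_prec cs cp r) a) id (cobr cp b)) (tmap id (Rop (dual_prec cs cp r) a) (cobr cp b)))
     (flip (t2sub (tmap (Lop (dual_succ cs cp r) b) id (cobr cs a)) (tmap id (Rsum (dual_succ cs cp r) (dual_prec cs cp r) b) (cobr cs a)))) i j = 0" .
qed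

end


definition S4 :: "('i::finite \<Rightarrow> 'i \<Rightarrow> 'k::field) \<Rightarrow> ('i \<Rightarrow> 'i \<Rightarrow> 'i \<Rightarrow> 'i \<Rightarrow> 'k) \<Rightarrow> 'k" where
  "S4 r F = (\<Sum>p\<in>UNIV. \<Sum>q\<in>UNIV. \<Sum>s\<in>UNIV. \<Sum>t\<in>UNIV. r p q * r s t * F p q s t)"

lemma S4_add: "S4 r (\<lambda>p q s t. F p q s t + G p q s t) = S4 r F + S4 r G"
  by (simp add: S4_def distrib_left sum.distrib)
lemma S4_diff: "S4 r (\<lambda>p q s t. F p q s t - G p q s t) = S4 r F - S4 r G"
  by (simp add: S4_def right_diff_distrib sum_subtractf)
lemma S4_cmult: "S4 r (\<lambda>p q s t. c * F p q s t) = c * S4 r F"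
  by (simp add: S4_def sum_distrib_left ac_simps)
lemma S4_zero: "S4 r (\<lambda>p q s t. 0) = 0"
  by (simp add: S4_def)
lemma S4_cong: "(\<And>p q s t. F p q s t = G p q s t) \<Longrightarrow> S4 r F = S4 r G"
  by (simp add: S4_def)

lemma S4_sum: "S4 r (\<lambda>p q s t. \<Sum>a\<in>A. F a p q s t) = (\<Sum>a\<in>A. S4 r (F a))"
proof -
  have "S4 r (\<lambda>p q s t. \<Sum>a\<in>A. F a p q s t) =
    (\<Sum>p\<in>UNIV. \<Sum>q\<in>UNIV. \<Sum>s\<in>UNIV. \<Sum>t\<in>UNIV. \<Sum>a\<in>A. r p q * r s t * F a p q s t)"
    by (simp add: S4_def sum_distrib_left)
  also have "\<dots> = (\<Sum>p\<in>UNIV. \<Sum>q\<in>UNIV. \<Sum>s\<in>UNIV. \<Sum>a\<in>A. \<Sum>t\<in>UNIV. r p q * r s t * F a p q s t)"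
    by (intro sum.cong refl sum.swap)
  also have "\<dots> = (\<Sum>p\<in>UNIV. \<Sum>q\<in>UNIV. \<Sum>a\<in>A. \<Sum>s\<in>UNIV. \<Sum>t\<in>UNIV. r p q * r s t * F a p q s t)"
    by (intro sum.cong refl sum.swap)
  also have "\<dots> = (\<Sum>p\<in>UNIV. \<Sum>a\<in>A. \<Sum>q\<in>UNIV. \<Sum>s\<in>UNIV. \<Sum>t\<in>UNIV. r p q * r s t * F a p q s t)"
    by (intro sum.cong refl sum.swap)
  also have "\<dots> = (\<Sum>a\<in>A. \<Sum>p\<in>UNIV. \<Sum>q\<in>UNIV. \<Sum>s\<in>UNIV. \<Sum>t\<in>UNIV. r p q * r s t * F a p q s t)"
    by (rule sum.swap)
  finally show ?thesis by (simp add: S4_def)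
qed

lemma S4_sw: "S4 r F = S4 r (\<lambda>p q s t. F s t p q)"
  unfolding S4_def by (subst sum_swap22) (simp add: ac_simps)

lemma S4_f1: assumes "tsym r" shows "S4 r F = S4 r (\<lambda>p q s t. F q p s t)"
  unfolding S4_def by (subst sum.swap) (simp add: tsymD[OF assms])
lemma S4_f2: assumes "tsym r" shows "S4 r F = S4 r (\<lambda>p q s t. F p q t s)"
  unfolding S4_def
  apply (rule sum.cong[OF refl], rule sum.cong[OF refl])
  by (subst sum.swap) (simp add: tsymD[OF assms])

lemma S4_inv0: "S4 r F = S4 r G \<Longrightarrow> S4 r (\<lambda>p q s t. F p q s t - G p q s t) = 0"
  by (simp add: S4_diff)

lemma S4_eqI:
  assumes sym: "tsym r"
  and eq: "\<And>p q s t. F p q s t = G p q s t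
      + (Ha p q s t - Ha q p s t) + (Hb p q s t - Hb p q t s) + (Hc p q s t - Hc q p t s)
      + (Hd p q s t - Hd s t p q) + (He p q s t - He t s p q) + (Hf p q s t - Hf s t q p) + (Hg p q s t - Hg t s q p)"
  shows "S4 r F = S4 r G"
proof -
  have i1: "S4 r (\<lambda>p q s t. Ha p q s t - Ha q p s t) = 0" by (rule S4_inv0, rule S4_f1[OF sym])
  have i2: "S4 r (\<lambda>p q s t. Hb p q s t - Hb p q t s) = 0" by (rule S4_inv0, rule S4_f2[OF sym])
  have i3: "S4 r (\<lambda>p q s t. Hc p q s t - Hc q p t s) = 0"
    by (rule S4_inv0, subst S4_f1[OF sym], subst S4_f2[OF sym], rule refl)
  have i4: "S4 r (\<lambda>p q s t. Hd p q s t - Hd s t p q) = 0" by (rule S4_inv0, rule S4_sw)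
  have i5: "S4 r (\<lambda>p q s t. He p q s t - He t s p q) = 0"
    by (rule S4_inv0, subst S4_sw, subst S4_f1[OF sym], rule refl)
  have i6: "S4 r (\<lambda>p q s t. Hf p q s t - Hf s t q p) = 0"
    by (rule S4_inv0, subst S4_sw, subst S4_f2[OF sym], rule refl)
  have i7: "S4 r (\<lambda>p q s t. Hg p q s t - Hg t s q p) = 0"
    by (rule S4_inv0, subst S4_sw, subst S4_f1[OF sym], subst S4_f2[OF sym], rule refl)
  have "S4 r F = S4 r (\<lambda>p q s t. G p q s t
      + (Ha p q s t - Ha q p s t) + (Hb p q s t - Hb p q t s) + (Hc p q s t - Hc q p t s)
      + (Hd p q s t - Hd s t p q) + (He p q s t - He t s p q) + (Hf p q s t - Hf s t q p) + (Hg p q s t - Hg t s q p))"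
    by (rule S4_cong, rule eq)
  also have "\<dots> = S4 r G" by (simp only: S4_add i1 i2 i3 i4 i5 i6 i7) simp
  finally show ?thesis .
qed


definition islinF :: "(('i::finite \<Rightarrow> 'k::field) \<Rightarrow> 'k) \<Rightarrow> bool" where
  "islinF f \<longleftrightarrow> (\<forall>u. f u = (\<Sum>m\<in>UNIV. u m * f (bvec m)))"

lemma islinFD: "islinF f \<Longrightarrow> f u = (\<Sum>m\<in>UNIV. u m * f (bvec m))"
  unfolding islinF_def by blast

lemma islinF_ev: "islinF (\<lambda>u. u i)"
  by (simp add: islinF_def)
lemma islinF_L: "islinF (\<lambda>u. bprod c x u l)"
  unfolding islinF_def by (intro allI) (rule bprod_lin2)
lemma islinF_R: "islinF (\<lambda>u. bprod c u x l)"
  unfolding islinF_def by (intro allI) (rule bprod_lin1)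
lemma islinF_AL: "islinF (\<lambda>u. aprod cs cp x u l)"
  unfolding islinF_def by (intro allI) (rule aprod_lin2)
lemma islinF_AR: "islinF (\<lambda>u. aprod cs cp u x l)"
  unfolding islinF_def by (intro allI) (rule aprod_lin1)

lemma prod3: "(\<Sum>a\<in>A. X a) * (\<Sum>b\<in>B. Y b) * (\<Sum>c\<in>C. Z c) = (\<Sum>a\<in>A. \<Sum>b\<in>B. \<Sum>c\<in>C. X a * Y b * (Z c :: 'k::field))"
proof -
  have "(\<Sum>a\<in>A. X a) * (\<Sum>b\<in>B. Y b) = (\<Sum>a\<in>A. \<Sum>b\<in>B. X a * Y b)" by (rule sum_product)
  then have "(\<Sum>a\<in>A. X a) * (\<Sum>b\<in>B. Y b) * (\<Sum>c\<in>C. Z c) = (\<Sum>a\<in>A. \<Sum>b\<in>B. X a * Y b) * (\<Sum>c\<in>C. Z c)" by simp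
  also have "\<dots> = (\<Sum>a\<in>A. \<Sum>b\<in>B. \<Sum>c\<in>C. X a * Y b * Z c)"
    by (simp only: sum_distrib_right) (simp only: sum_distrib_left)
  finally show ?thesis .
qed

lemma trilin:
  assumes f1: "islinF f1" and f2: "islinF f2" and f3: "islinF f3"
  shows "S4 r (\<lambda>p q s t. f1 (U p q s t) * f2 (V p q s t) * f3 (W p q s t)) =
    (\<Sum>a\<in>UNIV. \<Sum>b\<in>UNIV. \<Sum>c\<in>UNIV. (f1 (bvec a) * f2 (bvec b) * f3 (bvec c)) * S4 r (\<lambda>p q s t. U p q s t a * V p q s t b * W p q s t c))"
proof -
  have "S4 r (\<lambda>p q s t. f1 (U p q s t) * f2 (V p q s t) * f3 (W p q s t)) =
    S4 r (\<lambda>p q s t. \<Sum>a\<in>UNIV. \<Sum>b\<in>UNIV. \<Sum>c\<in>UNIV. (f1 (bvec a) * f2 (bvec b) * f3 (bvec c)) * (U p q s t a * V p q s t b * W p q s t c))"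
  proof (rule S4_cong)
    fix p q s t
    show "f1 (U p q s t) * f2 (V p q s t) * f3 (W p q s t) =
      (\<Sum>a\<in>UNIV. \<Sum>b\<in>UNIV. \<Sum>c\<in>UNIV. (f1 (bvec a) * f2 (bvec b) * f3 (bvec c)) * (U p q s t a * V p q s t b * W p q s t c))"
      apply (subst islinFD[OF f1, of "U p q s t"], subst islinFD[OF f2, of "V p q s t"], subst islinFD[OF f3, of "W p q s t"])
      apply (subst prod3)
      by (simp add: ac_simps)
  qed
  also have "\<dots> = (\<Sum>a\<in>UNIV. \<Sum>b\<in>UNIV. \<Sum>c\<in>UNIV. (f1 (bvec a) * f2 (bvec b) * f3 (bvec c)) * S4 r (\<lambda>p q s t. U p q s t a * V p q s t b * W p q s t c))"
    by (simp only: S4_sum S4_cmult)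
  finally show ?thesis .
qed

lemma Deq_pt: assumes "D_equation cs cp r"
  shows "S4 r (\<lambda>p q s t. aprod cs cp (bvec p) (bvec s) a * bvec q b * bvec t c) =
    S4 r (\<lambda>p q s t. bvec p a * bvec s b * bprod cp (bvec q) (bvec t) c) +
    S4 r (\<lambda>p q s t. bvec s a * bprod cs (bvec p) (bvec t) b * bvec q c)"
proof -
  have "r12_star_r13 cs cp r a b c = r13_prec_r23 cp r a b c + r23_succ_r12 cs r a b c"
    using assms unfolding D_equation_def by metis
  then show ?thesis
    by (simp add: S4_def r12_star_r13_def r13_prec_r23_def r23_succ_r12_def tens3_def)
qed

lemma Dlem:
  assumes Deq: "D_equation cs cp r" and f1: "islinF f1" and f2: "islinF f2" and f3: "islinF f3"
  shows "S4 r (\<lambda>p q s t. f1 (aprod cs cp (bvec p) (bvec s)) * f2 (bvec q) * f3 (bvec t)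
     - f1 (bvec p) * f2 (bvec s) * f3 (bprod cp (bvec q) (bvec t))
     - f1 (bvec s) * f2 (bprod cs (bvec p) (bvec t)) * f3 (bvec q)) = 0"
proof -
  have "S4 r (\<lambda>p q s t. f1 (aprod cs cp (bvec p) (bvec s)) * f2 (bvec q) * f3 (bvec t)) =
    S4 r (\<lambda>p q s t. f1 (bvec p) * f2 (bvec s) * f3 (bprod cp (bvec q) (bvec t))) +
    S4 r (\<lambda>p q s t. f1 (bvec s) * f2 (bprod cs (bvec p) (bvec t)) * f3 (bvec q))"
    by (simp only: trilin[OF f1 f2 f3] Deq_pt[OF Deq] distrib_left sum.distrib)
  then show ?thesis by (simp only: S4_diff) simp
qed


lemma compL: assumes lin: "\<And>u. D u c d = (\<Sum>m\<in>UNIV. u m * D (bvec m) c d)"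
  shows "(\<Sum>m\<in>UNIV. D (bvec m) c d * (\<Sum>p\<in>UNIV. \<Sum>q\<in>UNIV. r p q * (X p q * U p q m - Y p q * U' p q m))) =
    (\<Sum>p\<in>UNIV. \<Sum>q\<in>UNIV. r p q * (X p q * D (U p q) c d - Y p q * D (U' p q) c d))"
proof -
  have "(\<Sum>m\<in>UNIV. D (bvec m) c d * (\<Sum>p\<in>UNIV. \<Sum>q\<in>UNIV. r p q * (X p q * U p q m - Y p q * U' p q m))) =
    (\<Sum>m\<in>UNIV. \<Sum>p\<in>UNIV. \<Sum>q\<in>UNIV. D (bvec m) c d * (r p q * (X p q * U p q m - Y p q * U' p q m)))"
    by (simp add: sum_distrib_left)
  also have "\<dots> = (\<Sum>p\<in>UNIV. \<Sum>q\<in>UNIV. \<Sum>m\<in>UNIV. D (bvec m) c d * (r p q * (X p q * U p q m - Y p q * U' p q m)))"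
    by (rule sum_rot3[symmetric])
  also have "\<dots> = (\<Sum>p\<in>UNIV. \<Sum>q\<in>UNIV. r p q * (X p q * D (U p q) c d - Y p q * D (U' p q) c d))"
  proof (intro sum.cong refl)
    fix p q
    show "(\<Sum>m\<in>UNIV. D (bvec m) c d * (r p q * (X p q * U p q m - Y p q * U' p q m))) =
      r p q * (X p q * D (U p q) c d - Y p q * D (U' p q) c d)"
      apply (subst lin[of "U p q"], subst lin[of "U' p q"])
      by (simp add: sum_distrib_left right_diff_distrib sum_subtractf ac_simps)
  qed
  finally show ?thesis .
qed

lemma S4_of: "(\<Sum>p\<in>UNIV. \<Sum>q\<in>UNIV. r p q * (X p q * (\<Sum>s\<in>UNIV. \<Sum>t\<in>UNIV. r s t * A p q s t) - Y p q * (\<Sum>s\<in>UNIV. \<Sum>t\<in>UNIV. r s t * B p q s t)))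
   = S4 r (\<lambda>p q s t. X p q * A p q s t - Y p q * B p q s t)"
  by (simp add: S4_def sum_distrib_left right_diff_distrib sum_subtractf ac_simps)

lemma Dp_m1: "Delta_prec_r cs cp r x m l = (\<Sum>p\<in>UNIV. \<Sum>q\<in>UNIV. r p q * (bprod cs x (bvec q) l * bvec p m - bvec q l * aprod cs cp (bvec p) x m))"
  by (simp add: Delta_prec_r_def t2sub_def tmap_expl Lop_def Rsum_def right_diff_distrib sum_subtractf ac_simps)
lemma Dp_m2: "Delta_prec_r cs cp r x a b = (\<Sum>p\<in>UNIV. \<Sum>q\<in>UNIV. r p q * (bvec p a * bprod cs x (bvec q) b - aprod cs cp (bvec p) x a * bvec q b))"
  by (simp add: Delta_prec_r_def t2sub_def tmap_expl Lop_def Rsum_def right_diff_distrib sum_subtractf ac_simps)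
lemma Ds_m1: "Delta_succ_r cs cp r x m l = (\<Sum>p\<in>UNIV. \<Sum>q\<in>UNIV. r p q * (bvec q l * bprod cp (bvec p) x m - aprod cs cp x (bvec q) l * bvec p m))"
  by (simp add: Delta_succ_r_def t2sub_def tmap_expl Lsum_def Rop_def right_diff_distrib sum_subtractf ac_simps)
lemma Ds_m2: "Delta_succ_r cs cp r x a b = (\<Sum>p\<in>UNIV. \<Sum>q\<in>UNIV. r p q * (bprod cp (bvec p) x a * bvec q b - bvec p a * aprod cs cp x (bvec q) b))"
  by (simp add: Delta_succ_r_def t2sub_def tmap_expl Lsum_def Rop_def right_diff_distrib sum_subtractf ac_simps)
lemma Dsum_e: "Delta_succ_r cs cp r x a b + Delta_prec_r cs cp r x a b =
   (\<Sum>p\<in>UNIV. \<Sum>q\<in>UNIV. r p q * (- (bvec p a * bprod cp x (bvec q) b) - bprod cs (bvec p) x a * bvec q b))"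
  using fun_cong[OF fun_cong[OF Dt[of cs cp r x]], of a b]
  by (simp add: t2sub_def tmap_expl Lop_def Rop_def right_diff_distrib sum_subtractf sum_negf ac_simps)
lemma Dsum_lin: "Delta_succ_r cs cp r u a b + Delta_prec_r cs cp r u a b =
   (\<Sum>m\<in>UNIV. u m * (Delta_succ_r cs cp r (bvec m) a b + Delta_prec_r cs cp r (bvec m) a b))"
  by (subst Ds_lin, subst Dp_lin) (simp add: distrib_left sum.distrib)

lemma sideL1: "(\<Sum>m\<in>UNIV. Delta_prec_r cs cp r (bvec m) i j * Delta_prec_r cs cp r x m l) = S4 r (\<lambda>p q s t.
  bprod cs x (bvec q) l * (bvec s i * bprod cs (bvec p) (bvec t) j - aprod cs cp (bvec s) (bvec p) i * bvec t j)
  - bvec q l * (bvec s i * bprod cs (aprod cs cp (bvec p) x) (bvec t) j - aprod cs cp (bvec s) (aprod cs cp (bvec p) x) i * bvec t j))"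
  apply (simp only: Dp_m1[of cs cp r x])
  apply (subst compL[where D="Delta_prec_r cs cp r"], rule Dp_lin)
  apply (simp only: Dp_m2 S4_of)
  done

lemma sideR1: "(\<Sum>m\<in>UNIV. (Delta_succ_r cs cp r (bvec m) j l + Delta_prec_r cs cp r (bvec m) j l) * Delta_prec_r cs cp r x i m) = S4 r (\<lambda>p q s t.
  bvec p i * (- (bvec s j * bprod cp (bprod cs x (bvec q)) (bvec t) l) - bprod cs (bvec s) (bprod cs x (bvec q)) j * bvec t l)
  - aprod cs cp (bvec p) x i * (- (bvec s j * bprod cp (bvec q) (bvec t) l) - bprod cs (bvec s) (bvec q) j * bvec t l))"
  apply (simp only: Dp_m2[of cs cp r x])
  apply (subst compL[where D="\<lambda>u a b. Delta_succ_r cs cp r u a b + Delta_prec_r cs cp r u a b"], rule Dsum_lin)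
  apply (simp only: Dsum_e S4_of)
  done

lemma sideL2: "(\<Sum>m\<in>UNIV. Delta_succ_r cs cp r (bvec m) i j * Delta_prec_r cs cp r x m l) = S4 r (\<lambda>p q s t.
  bprod cs x (bvec q) l * (bprod cp (bvec s) (bvec p) i * bvec t j - bvec s i * aprod cs cp (bvec p) (bvec t) j)
  - bvec q l * (bprod cp (bvec s) (aprod cs cp (bvec p) x) i * bvec t j - bvec s i * aprod cs cp (aprod cs cp (bvec p) x) (bvec t) j))"
  apply (simp only: Dp_m1[of cs cp r x])
  apply (subst compL[where D="Delta_succ_r cs cp r"], rule Ds_lin)
  apply (simp only: Ds_m2 S4_of)
  done

lemma sideR2: "(\<Sum>m\<in>UNIV. Delta_prec_r cs cp r (bvec m) j l * Delta_succ_r cs cp r x i m) = S4 r (\<lambda>p q s t.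
  bprod cp (bvec p) x i * (bvec s j * bprod cs (bvec q) (bvec t) l - aprod cs cp (bvec s) (bvec q) j * bvec t l)
  - bvec p i * (bvec s j * bprod cs (aprod cs cp x (bvec q)) (bvec t) l - aprod cs cp (bvec s) (aprod cs cp x (bvec q)) j * bvec t l))"
  apply (simp only: Ds_m2[of cs cp r x])
  apply (subst compL[where D="Delta_prec_r cs cp r"], rule Dp_lin)
  apply (simp only: Dp_m2 S4_of)
  done

lemma sideL3: "(\<Sum>m\<in>UNIV. Delta_succ_r cs cp r (bvec m) j l * Delta_succ_r cs cp r x i m) = S4 r (\<lambda>p q s t.
  bprod cp (bvec p) x i * (bprod cp (bvec s) (bvec q) j * bvec t l - bvec s j * aprod cs cp (bvec q) (bvec t) l)
  - bvec p i * (bprod cp (bvec s) (aprod cs cp x (bvec q)) j * bvec t l - bvec s j * aprod cs cp (aprod cs cp x (bvec q)) (bvec t) l))"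
  apply (simp only: Ds_m2[of cs cp r x])
  apply (subst compL[where D="Delta_succ_r cs cp r"], rule Ds_lin)
  apply (simp only: Ds_m2 S4_of)
  done

lemma sideR3: "(\<Sum>m\<in>UNIV. (Delta_succ_r cs cp r (bvec m) i j + Delta_prec_r cs cp r (bvec m) i j) * Delta_succ_r cs cp r x m l) = S4 r (\<lambda>p q s t.
  bvec q l * (- (bvec s i * bprod cp (bprod cp (bvec p) x) (bvec t) j) - bprod cs (bvec s) (bprod cp (bvec p) x) i * bvec t j)
  - aprod cs cp x (bvec q) l * (- (bvec s i * bprod cp (bvec p) (bvec t) j) - bprod cs (bvec s) (bvec p) i * bvec t j))"
  apply (simp only: Ds_m1[of cs cp r x])
  apply (subst compL[where D="\<lambda>u a b. Delta_succ_r cs cp r u a b + Delta_prec_r cs cp r u a b"], rule Dsum_lin)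
  apply (simp only: Dsum_e S4_of)
  done


lemma E1core:
  assumes dend: "dendriform cs cp" and sym: "tsym r" and Deq: "D_equation cs cp r"
  shows "S4 r (\<lambda>p q s t. bprod cs x (bvec q) l * (bvec s i * bprod cs (bvec p) (bvec t) j - aprod cs cp (bvec s) (bvec p) i * bvec t j)
  - bvec q l * (bvec s i * bprod cs (aprod cs cp (bvec p) x) (bvec t) j - aprod cs cp (bvec s) (aprod cs cp (bvec p) x) i * bvec t j)) = S4 r (\<lambda>p q s t. bvec p i * (- (bvec s j * bprod cp (bprod cs x (bvec q)) (bvec t) l) - bprod cs (bvec s) (bprod cs x (bvec q)) j * bvec t l)
  - aprod cs cp (bvec p) x i * (- (bvec s j * bprod cp (bvec q) (bvec t) l) - bprod cs (bvec s) (bvec q) j * bvec t l))"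
proof -
  have z1: "S4 r (\<lambda>p q s t. aprod cs cp (bvec p) (bvec s) i * bvec q j * bprod cs x (bvec t) l - bvec p i * bvec s j * bprod cs x (bprod cp (bvec q) (bvec t)) l - bvec s i * bprod cs (bvec p) (bvec t) j * bprod cs x (bvec q) l) = 0"
    using Dlem[OF Deq islinF_ev[of i] islinF_ev[of j] islinF_L[of cs x l]] by simp
  have z2: "S4 r (\<lambda>p q s t. aprod cs cp (aprod cs cp (bvec p) (bvec s)) x i * bvec q j * bvec t l - aprod cs cp (bvec p) x i * bvec s j * bprod cp (bvec q) (bvec t) l - aprod cs cp (bvec s) x i * bprod cs (bvec p) (bvec t) j * bvec q l) = 0"
    using Dlem[OF Deq islinF_AR[of cs cp x i] islinF_ev[of j] islinF_ev[of l]] by simp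
  have e: "S4 r (\<lambda>p q s t. (bprod cs x (bvec q) l * (bvec s i * bprod cs (bvec p) (bvec t) j - aprod cs cp (bvec s) (bvec p) i * bvec t j)
  - bvec q l * (bvec s i * bprod cs (aprod cs cp (bvec p) x) (bvec t) j - aprod cs cp (bvec s) (aprod cs cp (bvec p) x) i * bvec t j)) - (bvec p i * (- (bvec s j * bprod cp (bprod cs x (bvec q)) (bvec t) l) - bprod cs (bvec s) (bprod cs x (bvec q)) j * bvec t l)
  - aprod cs cp (bvec p) x i * (- (bvec s j * bprod cp (bvec q) (bvec t) l) - bprod cs (bvec s) (bvec q) j * bvec t l))) = S4 r (\<lambda>p q s t. (aprod cs cp (aprod cs cp (bvec p) (bvec s)) x i * bvec q j * bvec t l - aprod cs cp (bvec p) x i * bvec s j * bprod cp (bvec q) (bvec t) l - aprod cs cp (bvec s) x i * bprod cs (bvec p) (bvec t) j * bvec q l) - (aprod cs cp (bvec p) (bvec s) i * bvec q j * bprod cs x (bvec t) l - bvec p i * bvec s j * bprod cs x (bprod cp (bvec q) (bvec t)) l - bvec s i * bprod cs (bvec p) (bvec t) j * bprod cs x (bvec q) l))"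
    by (rule S4_eqI[where Ha="\<lambda>p q s t. 0" and Hb="\<lambda>p q s t. 0" and Hc="\<lambda>p q s t. 0" and Hd="\<lambda>p q s t. aprod cs cp (bvec p) (bvec s) i * bvec q j * bprod cs x (bvec t) l - aprod cs cp (aprod cs cp (bvec p) (bvec s)) x i * bvec q j * bvec t l + aprod cs cp (bvec s) x i * bprod cs (bvec p) (bvec t) j * bvec q l - bvec q l * (bvec s i * bprod cs (aprod cs cp (bvec p) x) (bvec t) j)" and He="\<lambda>p q s t. 0" and Hf="\<lambda>p q s t. 0" and Hg="\<lambda>p q s t. 0", OF sym]) (simp add: assoc[OF dend, symmetric] ax2[OF dend] ax3[OF dend] algebra_simps)
  have "S4 r (\<lambda>p q s t. bprod cs x (bvec q) l * (bvec s i * bprod cs (bvec p) (bvec t) j - aprod cs cp (bvec s) (bvec p) i * bvec t j)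
  - bvec q l * (bvec s i * bprod cs (aprod cs cp (bvec p) x) (bvec t) j - aprod cs cp (bvec s) (aprod cs cp (bvec p) x) i * bvec t j)) - S4 r (\<lambda>p q s t. bvec p i * (- (bvec s j * bprod cp (bprod cs x (bvec q)) (bvec t) l) - bprod cs (bvec s) (bprod cs x (bvec q)) j * bvec t l)
  - aprod cs cp (bvec p) x i * (- (bvec s j * bprod cp (bvec q) (bvec t) l) - bprod cs (bvec s) (bvec q) j * bvec t l)) = S4 r (\<lambda>p q s t. (bprod cs x (bvec q) l * (bvec s i * bprod cs (bvec p) (bvec t) j - aprod cs cp (bvec s) (bvec p) i * bvec t j)
  - bvec q l * (bvec s i * bprod cs (aprod cs cp (bvec p) x) (bvec t) j - aprod cs cp (bvec s) (aprod cs cp (bvec p) x) i * bvec t j)) - (bvec p i * (- (bvec s j * bprod cp (bprod cs x (bvec q)) (bvec t) l) - bprod cs (bvec s) (bprod cs x (bvec q)) j * bvec t l)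
  - aprod cs cp (bvec p) x i * (- (bvec s j * bprod cp (bvec q) (bvec t) l) - bprod cs (bvec s) (bvec q) j * bvec t l)))"
    by (rule S4_diff[symmetric])
  also have "\<dots> = S4 r (\<lambda>p q s t. (aprod cs cp (aprod cs cp (bvec p) (bvec s)) x i * bvec q j * bvec t l - aprod cs cp (bvec p) x i * bvec s j * bprod cp (bvec q) (bvec t) l - aprod cs cp (bvec s) x i * bprod cs (bvec p) (bvec t) j * bvec q l) - (aprod cs cp (bvec p) (bvec s) i * bvec q j * bprod cs x (bvec t) l - bvec p i * bvec s j * bprod cs x (bprod cp (bvec q) (bvec t)) l - bvec s i * bprod cs (bvec p) (bvec t) j * bprod cs x (bvec q) l))" by (rule e)
  also have "\<dots> = S4 r (\<lambda>p q s t. aprod cs cp (aprod cs cp (bvec p) (bvec s)) x i * bvec q j * bvec t l - aprod cs cp (bvec p) x i * bvec s j * bprod cp (bvec q) (bvec t) l - aprod cs cp (bvec s) x i * bprod cs (bvec p) (bvec t) j * bvec q l) - S4 r (\<lambda>p q s t. aprod cs cp (bvec p) (bvec s) i * bvec q j * bprod cs x (bvec t) l - bvec p i * bvec s j * bprod cs x (bprod cp (bvec q) (bvec t)) l - bvec s i * bprod cs (bvec p) (bvec t) j * bprod cs x (bvec q) l)" by (rule S4_diff)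
  also have "\<dots> = 0" by (simp only: z1 z2) simp
  finally show ?thesis by simp
qed

lemma E2core:
  assumes dend: "dendriform cs cp" and sym: "tsym r" and Deq: "D_equation cs cp r"
  shows "S4 r (\<lambda>p q s t. bprod cs x (bvec q) l * (bprod cp (bvec s) (bvec p) i * bvec t j - bvec s i * aprod cs cp (bvec p) (bvec t) j)
  - bvec q l * (bprod cp (bvec s) (aprod cs cp (bvec p) x) i * bvec t j - bvec s i * aprod cs cp (aprod cs cp (bvec p) x) (bvec t) j)) = S4 r (\<lambda>p q s t. bprod cp (bvec p) x i * (bvec s j * bprod cs (bvec q) (bvec t) l - aprod cs cp (bvec s) (bvec q) j * bvec t l)
  - bvec p i * (bvec s j * bprod cs (aprod cs cp x (bvec q)) (bvec t) l - aprod cs cp (bvec s) (aprod cs cp x (bvec q)) j * bvec t l))"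
proof -
  have z1: "S4 r (\<lambda>p q s t. aprod cs cp (bvec p) (bvec s) j * bprod cs x (bvec q) l * bvec t i - bvec p j * bprod cs x (bvec s) l * bprod cp (bvec q) (bvec t) i - bvec s j * bprod cs x (bprod cs (bvec p) (bvec t)) l * bvec q i) = 0"
    using Dlem[OF Deq islinF_ev[of j] islinF_L[of cs x l] islinF_ev[of i]] by simp
  have z2: "S4 r (\<lambda>p q s t. aprod cs cp (bvec p) (bvec s) j * bvec q l * bprod cp (bvec t) x i - bvec p j * bvec s l * bprod cp (bprod cp (bvec q) (bvec t)) x i - bvec s j * bprod cs (bvec p) (bvec t) l * bprod cp (bvec q) x i) = 0"
    using Dlem[OF Deq islinF_ev[of j] islinF_ev[of l] islinF_R[of cp x i]] by simp
  have e: "S4 r (\<lambda>p q s t. (bprod cs x (bvec q) l * (bprod cp (bvec s) (bvec p) i * bvec t j - bvec s i * aprod cs cp (bvec p) (bvec t) j)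
  - bvec q l * (bprod cp (bvec s) (aprod cs cp (bvec p) x) i * bvec t j - bvec s i * aprod cs cp (aprod cs cp (bvec p) x) (bvec t) j)) - (bprod cp (bvec p) x i * (bvec s j * bprod cs (bvec q) (bvec t) l - aprod cs cp (bvec s) (bvec q) j * bvec t l)
  - bvec p i * (bvec s j * bprod cs (aprod cs cp x (bvec q)) (bvec t) l - aprod cs cp (bvec s) (aprod cs cp x (bvec q)) j * bvec t l))) = S4 r (\<lambda>p q s t. (aprod cs cp (bvec p) (bvec s) j * bvec q l * bprod cp (bvec t) x i - bvec p j * bvec s l * bprod cp (bprod cp (bvec q) (bvec t)) x i - bvec s j * bprod cs (bvec p) (bvec t) l * bprod cp (bvec q) x i) - (aprod cs cp (bvec p) (bvec s) j * bprod cs x (bvec q) l * bvec t i - bvec p j * bprod cs x (bvec s) l * bprod cp (bvec q) (bvec t) i - bvec s j * bprod cs x (bprod cs (bvec p) (bvec t)) l * bvec q i))"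
    by (rule S4_eqI[where Ha="\<lambda>p q s t. - (bvec s j * bprod cs x (bprod cs (bvec p) (bvec t)) l * bvec q i) + bvec s j * bprod cs (bvec p) (bvec t) l * bprod cp (bvec q) x i" and Hb="\<lambda>p q s t. aprod cs cp (bvec p) (bvec s) j * bprod cs x (bvec q) l * bvec t i" and Hc="\<lambda>p q s t. 0" and Hd="\<lambda>p q s t. bvec q l * bvec s i * aprod cs cp (aprod cs cp (bvec p) x) (bvec t) j" and He="\<lambda>p q s t. 0" and Hf="\<lambda>p q s t. - (aprod cs cp (bvec p) (bvec s) j * bvec q l * bprod cp (bvec t) x i)" and Hg="\<lambda>p q s t. - (bvec p j * bprod cs x (bvec s) l * bprod cp (bvec q) (bvec t) i) + bvec p j * bvec s l * bprod cp (bprod cp (bvec q) (bvec t)) x i", OF sym]) (simp add: assoc[OF dend] ax1[OF dend, symmetric] ax3[OF dend, symmetric] algebra_simps)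
  have "S4 r (\<lambda>p q s t. bprod cs x (bvec q) l * (bprod cp (bvec s) (bvec p) i * bvec t j - bvec s i * aprod cs cp (bvec p) (bvec t) j)
  - bvec q l * (bprod cp (bvec s) (aprod cs cp (bvec p) x) i * bvec t j - bvec s i * aprod cs cp (aprod cs cp (bvec p) x) (bvec t) j)) - S4 r (\<lambda>p q s t. bprod cp (bvec p) x i * (bvec s j * bprod cs (bvec q) (bvec t) l - aprod cs cp (bvec s) (bvec q) j * bvec t l)
  - bvec p i * (bvec s j * bprod cs (aprod cs cp x (bvec q)) (bvec t) l - aprod cs cp (bvec s) (aprod cs cp x (bvec q)) j * bvec t l)) = S4 r (\<lambda>p q s t. (bprod cs x (bvec q) l * (bprod cp (bvec s) (bvec p) i * bvec t j - bvec s i * aprod cs cp (bvec p) (bvec t) j)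
  - bvec q l * (bprod cp (bvec s) (aprod cs cp (bvec p) x) i * bvec t j - bvec s i * aprod cs cp (aprod cs cp (bvec p) x) (bvec t) j)) - (bprod cp (bvec p) x i * (bvec s j * bprod cs (bvec q) (bvec t) l - aprod cs cp (bvec s) (bvec q) j * bvec t l)
  - bvec p i * (bvec s j * bprod cs (aprod cs cp x (bvec q)) (bvec t) l - aprod cs cp (bvec s) (aprod cs cp x (bvec q)) j * bvec t l)))"
    by (rule S4_diff[symmetric])
  also have "\<dots> = S4 r (\<lambda>p q s t. (aprod cs cp (bvec p) (bvec s) j * bvec q l * bprod cp (bvec t) x i - bvec p j * bvec s l * bprod cp (bprod cp (bvec q) (bvec t)) x i - bvec s j * bprod cs (bvec p) (bvec t) l * bprod cp (bvec q) x i) - (aprod cs cp (bvec p) (bvec s) j * bprod cs x (bvec q) l * bvec t i - bvec p j * bprod cs x (bvec s) l * bprod cp (bvec q) (bvec t) i - bvec s j * bprod cs x (bprod cs (bvec p) (bvec t)) l * bvec q i))" by (rule e)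
  also have "\<dots> = S4 r (\<lambda>p q s t. aprod cs cp (bvec p) (bvec s) j * bvec q l * bprod cp (bvec t) x i - bvec p j * bvec s l * bprod cp (bprod cp (bvec q) (bvec t)) x i - bvec s j * bprod cs (bvec p) (bvec t) l * bprod cp (bvec q) x i) - S4 r (\<lambda>p q s t. aprod cs cp (bvec p) (bvec s) j * bprod cs x (bvec q) l * bvec t i - bvec p j * bprod cs x (bvec s) l * bprod cp (bvec q) (bvec t) i - bvec s j * bprod cs x (bprod cs (bvec p) (bvec t)) l * bvec q i)" by (rule S4_diff)
  also have "\<dots> = 0" by (simp only: z1 z2) simp
  finally show ?thesis by simp
qed

lemma E3core:
  assumes dend: "dendriform cs cp" and sym: "tsym r" and Deq: "D_equation cs cp r"
  shows "S4 r (\<lambda>p q s t. bprod cp (bvec p) x i * (bprod cp (bvec s) (bvec q) j * bvec t l - bvec s j * aprod cs cp (bvec q) (bvec t) l)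
  - bvec p i * (bprod cp (bvec s) (aprod cs cp x (bvec q)) j * bvec t l - bvec s j * aprod cs cp (aprod cs cp x (bvec q)) (bvec t) l)) = S4 r (\<lambda>p q s t. bvec q l * (- (bvec s i * bprod cp (bprod cp (bvec p) x) (bvec t) j) - bprod cs (bvec s) (bprod cp (bvec p) x) i * bvec t j)
  - aprod cs cp x (bvec q) l * (- (bvec s i * bprod cp (bvec p) (bvec t) j) - bprod cs (bvec s) (bvec p) i * bvec t j))"
proof -
  have z1: "S4 r (\<lambda>p q s t. aprod cs cp x (aprod cs cp (bvec p) (bvec s)) l * bvec q i * bvec t j - aprod cs cp x (bvec p) l * bvec s i * bprod cp (bvec q) (bvec t) j - aprod cs cp x (bvec s) l * bprod cs (bvec p) (bvec t) i * bvec q j) = 0"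
    using Dlem[OF Deq islinF_AL[of cs cp x l] islinF_ev[of i] islinF_ev[of j]] by simp
  have z2: "S4 r (\<lambda>p q s t. aprod cs cp (bvec p) (bvec s) l * bprod cp (bvec q) x i * bvec t j - bvec p l * bprod cp (bvec s) x i * bprod cp (bvec q) (bvec t) j - bvec s l * bprod cp (bprod cs (bvec p) (bvec t)) x i * bvec q j) = 0"
    using Dlem[OF Deq islinF_ev[of l] islinF_R[of cp x i] islinF_ev[of j]] by simp
  have e: "S4 r (\<lambda>p q s t. (bprod cp (bvec p) x i * (bprod cp (bvec s) (bvec q) j * bvec t l - bvec s j * aprod cs cp (bvec q) (bvec t) l)
  - bvec p i * (bprod cp (bvec s) (aprod cs cp x (bvec q)) j * bvec t l - bvec s j * aprod cs cp (aprod cs cp x (bvec q)) (bvec t) l)) - (bvec q l * (- (bvec s i * bprod cp (bprod cp (bvec p) x) (bvec t) j) - bprod cs (bvec s) (bprod cp (bvec p) x) i * bvec t j)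
  - aprod cs cp x (bvec q) l * (- (bvec s i * bprod cp (bvec p) (bvec t) j) - bprod cs (bvec s) (bvec p) i * bvec t j))) = S4 r (\<lambda>p q s t. (aprod cs cp x (aprod cs cp (bvec p) (bvec s)) l * bvec q i * bvec t j - aprod cs cp x (bvec p) l * bvec s i * bprod cp (bvec q) (bvec t) j - aprod cs cp x (bvec s) l * bprod cs (bvec p) (bvec t) i * bvec q j) - (aprod cs cp (bvec p) (bvec s) l * bprod cp (bvec q) x i * bvec t j - bvec p l * bprod cp (bvec s) x i * bprod cp (bvec q) (bvec t) j - bvec s l * bprod cp (bprod cs (bvec p) (bvec t)) x i * bvec q j))"
    by (rule S4_eqI[where Ha="\<lambda>p q s t. aprod cs cp x (bvec p) l * bvec s i * bprod cp (bvec q) (bvec t) j" and Hb="\<lambda>p q s t. 0" and Hc="\<lambda>p q s t. - (aprod cs cp x (aprod cs cp (bvec p) (bvec s)) l * bvec q i * bvec t j) + aprod cs cp (bvec p) (bvec s) l * bprod cp (bvec q) x i * bvec t j" and Hd="\<lambda>p q s t. - (bvec p i * bprod cp (bvec s) (aprod cs cp x (bvec q)) j * bvec t l)" and He="\<lambda>p q s t. - (bvec p l * bprod cp (bvec s) x i * bprod cp (bvec q) (bvec t) j)" and Hf="\<lambda>p q s t. aprod cs cp x (bvec s) l * bprod cs (bvec p) (bvec t) i * bvec q j - (bvec s l * bprod cp (bprod cs (bvec p) (bvec t)) x i * bvec q j)" and Hg="\<lambda>p q s t. 0", OF sym]) (simp add: assoc[OF dend] ax1[OF dend] ax2[OF dend,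 symmetric] algebra_simps)
  have "S4 r (\<lambda>p q s t. bprod cp (bvec p) x i * (bprod cp (bvec s) (bvec q) j * bvec t l - bvec s j * aprod cs cp (bvec q) (bvec t) l)
  - bvec p i * (bprod cp (bvec s) (aprod cs cp x (bvec q)) j * bvec t l - bvec s j * aprod cs cp (aprod cs cp x (bvec q)) (bvec t) l)) - S4 r (\<lambda>p q s t. bvec q l * (- (bvec s i * bprod cp (bprod cp (bvec p) x) (bvec t) j) - bprod cs (bvec s) (bprod cp (bvec p) x) i * bvec t j)
  - aprod cs cp x (bvec q) l * (- (bvec s i * bprod cp (bvec p) (bvec t) j) - bprod cs (bvec s) (bvec p) i * bvec t j)) = S4 r (\<lambda>p q s t. (bprod cp (bvec p) x i * (bprod cp (bvec s) (bvec q) j * bvec t l - bvec s j * aprod cs cp (bvec q) (bvec t) l)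
  - bvec p i * (bprod cp (bvec s) (aprod cs cp x (bvec q)) j * bvec t l - bvec s j * aprod cs cp (aprod cs cp x (bvec q)) (bvec t) l)) - (bvec q l * (- (bvec s i * bprod cp (bprod cp (bvec p) x) (bvec t) j) - bprod cs (bvec s) (bprod cp (bvec p) x) i * bvec t j)
  - aprod cs cp x (bvec q) l * (- (bvec s i * bprod cp (bvec p) (bvec t) j) - bprod cs (bvec s) (bvec p) i * bvec t j)))"
    by (rule S4_diff[symmetric])
  also have "\<dots> = S4 r (\<lambda>p q s t. (aprod cs cp x (aprod cs cp (bvec p) (bvec s)) l * bvec q i * bvec t j - aprod cs cp x (bvec p) l * bvec s i * bprod cp (bvec q) (bvec t) j - aprod cs cp x (bvec s) l * bprod cs (bvec p) (bvec t) i * bvec q j) - (aprod cs cp (bvec p) (bvec s) l * bprod cp (bvec q) x i * bvec t j - bvec p l * bprod cp (bvec s) x i * bprod cp (bvec q) (bvec t) j - bvec s l * bprod cp (bprod cs (bvec p) (bvec t)) x i * bvec q j))" by (rule e)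
  also have "\<dots> = S4 r (\<lambda>p q s t. aprod cs cp x (aprod cs cp (bvec p) (bvec s)) l * bvec q i * bvec t j - aprod cs cp x (bvec p) l * bvec s i * bprod cp (bvec q) (bvec t) j - aprod cs cp x (bvec s) l * bprod cs (bvec p) (bvec t) i * bvec q j) - S4 r (\<lambda>p q s t. aprod cs cp (bvec p) (bvec s) l * bprod cp (bvec q) x i * bvec t j - bvec p l * bprod cp (bvec s) x i * bprod cp (bvec q) (bvec t) j - bvec s l * bprod cp (bprod cs (bvec p) (bvec t)) x i * bvec q j)" by (rule S4_diff)
  also have "\<dots> = 0" by (simp only: z1 z2) simp
  finally show ?thesis by simp
qed


lemma CA: "bprod d1 (bprod d2 a b) c k = (\<Sum>i\<in>UNIV. \<Sum>j\<in>UNIV. \<Sum>l\<in>UNIV. a i * b j * c l * (\<Sum>m\<in>UNIV. d2 i j m * d1 m l k))"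
proof -
  have "bprod d1 (bprod d2 a b) c k = (\<Sum>m\<in>UNIV. \<Sum>l\<in>UNIV. \<Sum>i\<in>UNIV. \<Sum>j\<in>UNIV. a i * b j * c l * (d2 i j m * d1 m l k))"
    by (simp add: bprod_def sum_distrib_left sum_distrib_right ac_simps)
  also have "\<dots> = (\<Sum>i\<in>UNIV. \<Sum>j\<in>UNIV. \<Sum>m\<in>UNIV. \<Sum>l\<in>UNIV. a i * b j * c l * (d2 i j m * d1 m l k))"
    by (rule sum_swap22)
  also have "\<dots> = (\<Sum>i\<in>UNIV. \<Sum>j\<in>UNIV. \<Sum>l\<in>UNIV. \<Sum>m\<in>UNIV. a i * b j * c l * (d2 i j m * d1 m l k))"
    by (rule sum.cong[OF refl], rule sum.cong[OF refl], rule sum.swap)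
  also have "\<dots> = (\<Sum>i\<in>UNIV. \<Sum>j\<in>UNIV. \<Sum>l\<in>UNIV. a i * b j * c l * (\<Sum>m\<in>UNIV. d2 i j m * d1 m l k))"
    by (simp add: sum_distrib_left)
  finally show ?thesis .
qed

lemma CB: "bprod d1 a (bprod d2 b c) k = (\<Sum>i\<in>UNIV. \<Sum>j\<in>UNIV. \<Sum>l\<in>UNIV. a i * b j * c l * (\<Sum>m\<in>UNIV. d2 j l m * d1 i m k))"
proof -
  have "bprod d1 a (bprod d2 b c) k = (\<Sum>i\<in>UNIV. \<Sum>m\<in>UNIV. \<Sum>j\<in>UNIV. \<Sum>l\<in>UNIV. a i * b j * c l * (d2 j l m * d1 i m k))"
    by (simp add: bprod_def sum_distrib_left sum_distrib_right ac_simps)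
  also have "\<dots> = (\<Sum>i\<in>UNIV. \<Sum>j\<in>UNIV. \<Sum>l\<in>UNIV. \<Sum>m\<in>UNIV. a i * b j * c l * (d2 j l m * d1 i m k))"
    by (rule sum.cong[OF refl], rule sum_rot3[symmetric])
  also have "\<dots> = (\<Sum>i\<in>UNIV. \<Sum>j\<in>UNIV. \<Sum>l\<in>UNIV. a i * b j * c l * (\<Sum>m\<in>UNIV. d2 j l m * d1 i m k))"
    by (simp add: sum_distrib_left)
  finally show ?thesis .
qed

lemma sum3_add: "(\<Sum>i\<in>A. \<Sum>j\<in>B. \<Sum>l\<in>C. a i * b j * c l * X i j l) + (\<Sum>i\<in>A. \<Sum>j\<in>B. \<Sum>l\<in>C. a i * b j * c l * Y i j l) =
  (\<Sum>i\<in>A. \<Sum>j\<in>B. \<Sum>l\<in>C. a i * b j * c l * (X i j l + Y i j l :: 'k::field))"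
  by (simp add: sum.distrib distrib_left)
lemma sum_comb: "(\<Sum>m\<in>A. X m * Z m) + (\<Sum>m\<in>A. Y m * Z m) = (\<Sum>m\<in>A. (X m + Y m) * (Z m :: 'k::field))"
  by (simp add: sum.distrib distrib_right)

context
  fixes cs cp :: "'i::finite \<Rightarrow> 'i \<Rightarrow> 'i \<Rightarrow> 'k::field" and r :: "'i \<Rightarrow> 'i \<Rightarrow> 'k"
  assumes dend: "dendriform cs cp" and sym: "tsym r" and Deq: "D_equation cs cp r"
begin

lemma T1: "(\<Sum>m\<in>UNIV. dual_prec cs cp r i j m * dual_prec cs cp r m l k) =
  (\<Sum>m\<in>UNIV. dual_succ cs cp r j l m * dual_prec cs cp r i m k) + (\<Sum>m\<in>UNIV. dual_prec cs cp r j l m * dual_prec cs cp r i m k)"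
  unfolding dual_prec_def dual_succ_def
  by (simp only: sum_comb sideL1 sideR1 E1core[OF dend sym Deq])

lemma T2: "(\<Sum>m\<in>UNIV. dual_succ cs cp r i j m * dual_prec cs cp r m l k) =
  (\<Sum>m\<in>UNIV. dual_prec cs cp r j l m * dual_succ cs cp r i m k)"
  unfolding dual_prec_def dual_succ_def
  by (simp only: sideL2 sideR2 E2core[OF dend sym Deq])

lemma T3: "(\<Sum>m\<in>UNIV. dual_succ cs cp r j l m * dual_succ cs cp r i m k) =
  (\<Sum>m\<in>UNIV. dual_succ cs cp r i j m * dual_succ cs cp r m l k) + (\<Sum>m\<in>UNIV. dual_prec cs cp r i j m * dual_succ cs cp r m l k)"
  unfolding dual_prec_def dual_succ_def
  by (simp only: sum_comb sideL3 sideR3 E3core[OF dend sym Deq])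

lemma dual_dend: "dendriform (dual_succ cs cp r) (dual_prec cs cp r)"
  unfolding dendriform_def
proof (intro allI conjI ext)
  fix a b c :: "'i \<Rightarrow> 'k" and k
  show "bprod (dual_prec cs cp r) (bprod (dual_prec cs cp r) a b) c k =
        bprod (dual_prec cs cp r) a (aprod (dual_succ cs cp r) (dual_prec cs cp r) b c) k"
    by (simp only: aprod_def bprod_add2 CA CB sum3_add T1)
  show "bprod (dual_prec cs cp r) (bprod (dual_succ cs cp r) a b) c k =
        bprod (dual_succ cs cp r) a (bprod (dual_prec cs cp r) b c) k"
    by (simp only: CA CB T2)
  show "bprod (dual_succ cs cp r) a (bprod (dual_succ cs cp r) b c) k =
        bprod (dual_succ cs cp r) (aprod (dual_succ cs cp r) (dual_prec cs cp r) a b) c k"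
    by (simp only: aprod_def bprod_add1 CA CB sum3_add T3)
qed

end

theorem corollary4p4p4:
  fixes cs cp :: "'i::finite \<Rightarrow> 'i \<Rightarrow> 'i \<Rightarrow> 'k::field"
    and r :: "'i \<Rightarrow> 'i \<Rightarrow> 'k"
  assumes "dendriform cs cp"
    and "tsym r"
    and "D_equation cs cp r"
  shows "dendriform (dual_succ cs cp r) (dual_prec cs cp r) \<and>
         D_bialgebra cs cp (dual_succ cs cp r) (dual_prec cs cp r)"
proof -
  have dd: "dendriform (dual_succ cs cp r) (dual_prec cs cp r)"
    by (rule dual_dend[OF assms])
  have c1: "Dcond cs cp (dual_succ cs cp r) (dual_prec cs cp r)"
    unfolding Dcond_def using cond1[OF assms(1)] cond2[OF assms(1)] cond5[OF assms(1,2)] by blast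
  have c2: "Dcond (dual_succ cs cp r) (dual_prec cs cp r) cs cp"
    unfolding Dcond_def using cond3[OF assms(1)] cond4[OF assms(1)] cond6[OF assms(1,2)] by blast
  show ?thesis using dd c1 c2 assms(1) unfolding D_bialgebra_def by blast
qed

end
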